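(* Let $\gamma:K^*\to K$ be a non-degenerate simplicial dynamical system on an everywhere $d$-dimensional polyhedron $X$ ($d\ge1$), with associated p.l. map $g$ on $X$. Let $J:{}^dK^*\to{}^dK$ be the inclusion map and $G^*=J^{-1}\circ\gamma$ the associated relation on ${}^dK^*$. Then $$H_\gamma=\{(\mathbf{s}^*,x)\in{}^dK^*_{G^*}\times X: g^i(x)\in s^*_i\text{ for all } i\in\mathbb{Z}_+\}$$ is (the graph of) an almost one-to-one continuous map from ${}^dK^*_{G^*}$ onto $X$ which satisfies $H_\gamma\circ S=g\circ H_\gamma$.
   Context: Simplicial complexes, subdivisions, proper subdivisions (no simplex of $K^*$ meets two disjoint simplices of $K$), simplicial maps and associated p.l. maps $g(x)=\sum_vb_v(x)\gamma(v)$ are as usual. A simplicial dynamical system is a simplicial map $\gamma:K^*\to K$ with $K^*$ a proper subdivision of $K$; it is non-degenerate if $\dim\gamma(s^* )=\dim s^*$ for every simplex $s^*$ of $K^*$. A polyhedron is everywhere $d$-dimensional if it is a union of $d$-dimensional closed simplices. ${}^dK$ and ${}^dK^*$ denote the sets of $d$-simplices of $K$ and $K^*$; $J(s^* )$ is the unique $d$-simplex of $K$ containing $s^*$, and $\gamma$ restricts to a map ${}^dK^*\to{}^dK$. $(s_1^*,s_2^* )\in G^*$ iff $s_2^*\subset\gamma(s_1^* )$. For a relation $G^*$ on the finite set ${}^dK^*$, ${}^dK^*_{G^*}=\{\mathbf{s}^*\in({}^dK^* )^{\mathbb{Z}_+}:(s^*_i,s^*_{i+1})\in G^*\ \forall i\}$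 with the product topology and shift $S(\mathbf{s}^* )_i=s^*_{i+1}$. A continuous map $h$ is almost one-to-one if $\{y:h^{-1}(h(y))=\{y\}\}$ is dense in the domain. *)

theory Defs
  imports "HOL-Analysis.Analysis"
begin

text \<open>Simplices are represented by their (finite, affinely independent, nonempty)
vertex sets; the closed simplex is the convex hull of the vertex set.\<close>

definition simplicial_complex :: "'a::euclidean_space set set \<Rightarrow> bool" where
  "simplicial_complex K \<longleftrightarrow>
     finite K \<and>
     (\<forall>s\<in>K. finite s \<and> s \<noteq> {} \<and> \<not> affine_dependent s) \<and>
     (\<forall>s\<in>K. \<forall>t. t \<subseteq> s \<and> t \<noteq> {} \<longrightarrow> t \<in> K) \<and>
     (\<forall>s\<in>K. \<forall>t\<in>K. convex hull s \<inter> convex hull t = convex hull (s \<inter> t))"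

definition vertices :: "'a set set \<Rightarrow> 'a set" where
  "vertices K = \<Union>K"

definition polyhedron :: "'a::euclidean_space set set \<Rightarrow> 'a set" where
  "polyhedron K = (\<Union>s\<in>K. convex hull s)"

definition dsimplices :: "nat \<Rightarrow> 'a set set \<Rightarrow> 'a set set" where
  "dsimplices d K = {s\<in>K. card s = d + 1}"

definition subdivision :: "'a::euclidean_space set set \<Rightarrow> 'a set set \<Rightarrow> bool" where
  "subdivision K' K \<longleftrightarrow> simplicial_complex K' \<and> simplicial_complex K \<and>
     polyhedron K' = polyhedron K \<and>
     (\<forall>s'\<in>K'. \<exists>s\<in>K. convex hull s' \<subseteq> convex hull s)"

definition proper_subdivision :: "'a::euclidean_space set set \<Rightarrow> 'a set set \<Rightarrow> bool" where
  "proper_subdivision K' K \<longleftrightarrow> subdivision K' K \<and>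
     (\<forall>s'\<in>K'. \<not> (\<exists>s1\<in>K. \<exists>s2\<in>K. convex hull s1 \<inter> convex hull s2 = {} \<and>
                   convex hull s' \<inter> convex hull s1 \<noteq> {} \<and>
                   convex hull s' \<inter> convex hull s2 \<noteq> {}))"

definition simplicial_map :: "'a set set \<Rightarrow> 'a set set \<Rightarrow> ('a \<Rightarrow> 'a) \<Rightarrow> bool" where
  "simplicial_map K' K \<gamma> \<longleftrightarrow> (\<forall>s\<in>K'. \<gamma> ` s \<in> K)"

definition simplicial_dynamical_system ::
    "'a::euclidean_space set set \<Rightarrow> 'a set set \<Rightarrow> ('a \<Rightarrow> 'a) \<Rightarrow> bool" where
  "simplicial_dynamical_system K' K \<gamma> \<longleftrightarrow>
     proper_subdivision K' K \<and> simplicial_map K' K \<gamma>"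

definition non_degenerate :: "'a set set \<Rightarrow> ('a \<Rightarrow> 'a) \<Rightarrow> bool" where
  "non_degenerate K' \<gamma> \<longleftrightarrow> (\<forall>s\<in>K'. card (\<gamma> ` s) = card s)"

text \<open>Barycentric coordinate of x with respect to vertex v of the complex K
(0 if no simplex containing v contains x).\<close>
definition bary :: "'a::euclidean_space set set \<Rightarrow> 'a \<Rightarrow> 'a \<Rightarrow> real" where
  "bary K v x =
     (if \<exists>s\<in>K. v \<in> s \<and> x \<in> convex hull s then
        (SOME t. \<exists>s\<in>K. v \<in> s \<and> (\<exists>u. (\<forall>w\<in>s. 0 \<le> u w) \<and> sum u s = 1 \<and>
                     (\<Sum>w\<in>s. u w *\<^sub>R w) = x \<and> u v = t))
      else 0)"

definition pl_map :: "'a::euclidean_space set set \<Rightarrow> ('a \<Rightarrow> 'a) \<Rightarrow> 'a \<Rightarrow> 'a" where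
  "pl_map K' \<gamma> x = (\<Sum>v\<in>vertices K'. bary K' v x *\<^sub>R \<gamma> v)"

definition everywhere_dim :: "nat \<Rightarrow> 'a::euclidean_space set \<Rightarrow> bool" where
  "everywhere_dim d X \<longleftrightarrow> (\<exists>F. finite F \<and> (\<forall>T\<in>F. (int d) simplex T) \<and> X = \<Union>F)"

definition Grel :: "nat \<Rightarrow> 'a::euclidean_space set set \<Rightarrow> ('a \<Rightarrow> 'a) \<Rightarrow> ('a set \<times> 'a set) set" where
  "Grel d K' \<gamma> = {(s1, s2). s1 \<in> dsimplices d K' \<and> s2 \<in> dsimplices d K' \<and>
                    convex hull s2 \<subseteq> convex hull (\<gamma> ` s1)}"

definition shift_space :: "'b set \<Rightarrow> ('b \<times> 'b) set \<Rightarrow> (nat \<Rightarrow> 'b) set" where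
  "shift_space A G = {s. (\<forall>i. s i \<in> A) \<and> (\<forall>i. (s i, s (Suc i)) \<in> G)}"

definition shift_top :: "'b set \<Rightarrow> ('b \<times> 'b) set \<Rightarrow> (nat \<Rightarrow> 'b) topology" where
  "shift_top A G = subtopology (product_topology (\<lambda>_. discrete_topology A) UNIV) (shift_space A G)"

definition shift :: "(nat \<Rightarrow> 'b) \<Rightarrow> (nat \<Rightarrow> 'b)" where
  "shift s = (\<lambda>i. s (Suc i))"

definition almost_one_to_one :: "'b topology \<Rightarrow> ('b \<Rightarrow> 'c) \<Rightarrow> bool" where
  "almost_one_to_one T h \<longleftrightarrow>
     T closure_of {y\<in>topspace T. {z\<in>topspace T. h z = h y} = {y}} = topspace T"

end

theory Submission
  imports Defs
begin


definition rep :: "'a::real_vector set \<Rightarrow> 'a \<Rightarrow> ('a \<Rightarrow> real) \<Rightarrow> bool" where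
  "rep s x u \<longleftrightarrow> (\<forall>w\<in>s. 0 \<le> u w) \<and> sum u s = 1 \<and> (\<Sum>w\<in>s. u w *\<^sub>R w) = x"

lemma hull_rep: "finite s \<Longrightarrow> x \<in> convex hull s \<longleftrightarrow> (\<exists>u. rep s x u)"
  by (simp add: convex_hull_finite rep_def)

lemma coords_unique:
  assumes "finite s" "\<not> affine_dependent s" "sum u s = 1" "sum u' s = 1"
    "(\<Sum>w\<in>s. u w *\<^sub>R w) = (\<Sum>w\<in>s. u' w *\<^sub>R w)" "w \<in> s"
  shows "u w = u' w"
proof (rule ccontr)
  assume ne: "u w \<noteq> u' w"
  have "sum (\<lambda>v. u v - u' v) s = 0" using assms by (simp add: sum_subtractf)
  moreover have "(\<Sum>v\<in>s. (u v - u' v) *\<^sub>R v) = 0"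
    using assms(5) by (simp add: scaleR_diff_left sum_subtractf)
  ultimately have "affine_dependent s"
    using assms(1,6) ne by (subst affine_dependent_explicit_finite) (auto intro!: exI[of _ "\<lambda>v. u v - u' v"])
  with assms(2) show False by simp
qed

lemma rep_unique: "finite s \<Longrightarrow> \<not> affine_dependent s \<Longrightarrow> rep s x u \<Longrightarrow> rep s x u' \<Longrightarrow> w \<in> s \<Longrightarrow> u w = u' w"
proof -
  assume a: "finite s" "\<not> affine_dependent s" "rep s x u" "rep s x u'" "w \<in> s"
  have "sum u s = 1" "sum u' s = 1" "(\<Sum>w\<in>s. u w *\<^sub>R w) = (\<Sum>w\<in>s. u' w *\<^sub>R w)"
    using a(3,4) unfolding rep_def by auto
  then show "u w = u' w" using coords_unique[OF a(1,2)] a(5) by blast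
qed

lemma sc_simplex: "simplicial_complex K \<Longrightarrow> s \<in> K \<Longrightarrow> finite s \<and> s \<noteq> {} \<and> \<not> affine_dependent s"
  unfolding simplicial_complex_def by blast
lemma sc_finite: "simplicial_complex K \<Longrightarrow> finite K"
  unfolding simplicial_complex_def by blast
lemma sc_face: "simplicial_complex K \<Longrightarrow> s \<in> K \<Longrightarrow> t \<subseteq> s \<Longrightarrow> t \<noteq> {} \<Longrightarrow> t \<in> K"
  unfolding simplicial_complex_def by blast
lemma sc_inter: "simplicial_complex K \<Longrightarrow> s \<in> K \<Longrightarrow> t \<in> K \<Longrightarrow> convex hull s \<inter> convex hull t = convex hull (s \<inter> t)"
  unfolding simplicial_complex_def by blast

lemma coords_via_inter:
  assumes sc: "simplicial_complex K" and s: "s \<in> K" and s': "s' \<in> K"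
    and x': "x \<in> convex hull s'" and u: "rep s x u"
  shows "\<exists>\<rho>. rep (s \<inter> s') x \<rho> \<and> (\<forall>w\<in>s. u w = (if w \<in> s' then \<rho> w else 0))"
proof -
  have fs: "finite s" "\<not> affine_dependent s" using sc_simplex[OF sc s] by auto
  have "x \<in> convex hull s" using u fs hull_rep by blast
  then have "x \<in> convex hull (s \<inter> s')" using sc_inter[OF sc s s'] x' by blast
  then obtain \<rho> where \<rho>: "rep (s \<inter> s') x \<rho>" using hull_rep fs by (meson finite_Int)
  define \<rho>' where "\<rho>' = (\<lambda>w. if w \<in> s' then \<rho> w else 0)"
  have "rep s x \<rho>'"
  proof -
    have 1: "sum \<rho>' s = sum \<rho> (s \<inter> s')" unfolding \<rho>'_def using fs by (simp add: sum.inter_restrict)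
    have "(\<Sum>w\<in>s. \<rho>' w *\<^sub>R w) = (\<Sum>w\<in>s. if w \<in> s' then \<rho> w *\<^sub>R w else 0)"
      by (rule sum.cong) (auto simp: \<rho>'_def)
    also have "\<dots> = (\<Sum>w\<in>s \<inter> s'. \<rho> w *\<^sub>R w)" using fs by (simp add: sum.inter_restrict)
    finally have 2: "(\<Sum>w\<in>s. \<rho>' w *\<^sub>R w) = (\<Sum>w\<in>s \<inter> s'. \<rho> w *\<^sub>R w)" .
    show ?thesis using \<rho> 1 2 unfolding rep_def \<rho>'_def by auto
  qed
  then have "\<forall>w\<in>s. u w = \<rho>' w" using rep_unique[OF fs u] by blast
  then show ?thesis using \<rho> unfolding \<rho>'_def by blast
qed

lemma coords_agree:
  assumes sc: "simplicial_complex K" and s: "s \<in> K" and s': "s' \<in> K"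
    and u: "rep s x u" and u': "rep s' x u'" and w: "w \<in> s \<inter> s'"
  shows "u w = u' w"
proof -
  have f: "finite s" "finite s'" using sc_simplex[OF sc s] sc_simplex[OF sc s'] by auto
  have x': "x \<in> convex hull s'" "x \<in> convex hull s" using u u' f hull_rep by blast+
  obtain \<rho> where \<rho>: "rep (s \<inter> s') x \<rho>" "\<forall>w\<in>s. u w = (if w \<in> s' then \<rho> w else 0)"
    using coords_via_inter[OF sc s s' x'(1) u] by blast
  obtain \<rho>2 where \<rho>2: "rep (s' \<inter> s) x \<rho>2" "\<forall>w\<in>s'. u' w = (if w \<in> s then \<rho>2 w else 0)"
    using coords_via_inter[OF sc s' s x'(2) u'] by blast
  have ai: "\<not> affine_dependent (s \<inter> s')"
    using sc_simplex[OF sc s] affine_dependent_subset by (metis inf_le1)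
  have "\<rho> w = \<rho>2 w" using rep_unique[OF _ ai \<rho>(1)] \<rho>2(1) w f by (simp add: Int_commute)
  then show ?thesis using \<rho> \<rho>2 w by auto
qed

lemma coords_zero:
  assumes sc: "simplicial_complex K" and s: "s \<in> K" and s': "s' \<in> K"
    and u: "rep s x u" and x': "x \<in> convex hull s'" and w: "w \<in> s" "w \<notin> s'"
  shows "u w = 0"
proof -
  obtain \<rho> where "\<forall>w\<in>s. u w = (if w \<in> s' then \<rho> w else 0)"
    using coords_via_inter[OF sc s s' x' u] by blast
  then show ?thesis using w by simp
qed

lemma bary_eq:
  assumes sc: "simplicial_complex K" and s: "s \<in> K" and u: "rep s x u"
  shows "bary K v x = (if v \<in> s then u v else 0)"
proof -
  have fs: "finite s" using sc_simplex[OF sc s] by auto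
  have xs: "x \<in> convex hull s" using u fs hull_rep by blast
  define P where "P = (\<lambda>t. \<exists>s\<in>K. v \<in> s \<and> (\<exists>u. (\<forall>w\<in>s. 0 \<le> u w) \<and> sum u s = 1 \<and>
                     (\<Sum>w\<in>s. u w *\<^sub>R w) = x \<and> u v = t))"
  have bd: "bary K v x = (if \<exists>s\<in>K. v \<in> s \<and> x \<in> convex hull s then Eps P else 0)"
    unfolding bary_def P_def by simp
  have Pe: "P t \<longleftrightarrow> (\<exists>s'\<in>K. v \<in> s' \<and> (\<exists>u'. rep s' x u' \<and> u' v = t))" for t
    unfolding P_def rep_def by blast
  show ?thesis
  proof (cases "v \<in> s")
    case True
    have ex: "\<exists>s\<in>K. v \<in> s \<and> x \<in> convex hull s" using True s xs by blast
    have "P (u v)" unfolding Pe using s True u by blast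
    moreover have "t = u v" if "P t" for t
    proof -
      have "\<exists>s'\<in>K. v \<in> s' \<and> (\<exists>u'. rep s' x u' \<and> u' v = t)" using that by (simp only: Pe)
      then obtain s' u' where "s' \<in> K" "v \<in> s'" "rep s' x u'" "u' v = t" by blast
      then show "t = u v" using coords_agree[OF sc s \<open>s' \<in> K\<close> u, of u' v] True by simp
    qed
    ultimately have "Eps P = u v" using someI[of P "u v"] by blast
    then show ?thesis using ex True bd by simp
  next
    case False
    show ?thesis
    proof (cases "\<exists>s\<in>K. v \<in> s \<and> x \<in> convex hull s")
      case True
      then obtain s0 where s0: "s0 \<in> K" "v \<in> s0" "x \<in> convex hull s0" by blast
      then obtain u0 where "rep s0 x u0" using hull_rep sc_simplex[OF sc s0(1)] by blast
      then have "P (u0 v)" unfolding Pe using s0 by blast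
      moreover have "t = 0" if "P t" for t
      proof -
        have "\<exists>s'\<in>K. v \<in> s' \<and> (\<exists>u'. rep s' x u' \<and> u' v = t)" using that by (simp only: Pe)
      then obtain s' u' where "s' \<in> K" "v \<in> s'" "rep s' x u'" "u' v = t" by blast
        then show "t = 0" using coords_zero[OF sc \<open>s' \<in> K\<close> s _ xs, of u' v] False by simp
      qed
      ultimately have "Eps P = 0" using someI[of P "u0 v"] by blast
      then show ?thesis using True False bd by simp
    next
      case nex: False
      have "bary K v x = 0" unfolding bd using nex by (rule if_not_P)
      then show ?thesis using False by simp
    qed
  qed
qed

lemma pl_map_eq:
  assumes sc: "simplicial_complex K" and s: "s \<in> K" and u: "rep s x u"
  shows "pl_map K \<gamma> x = (\<Sum>w\<in>s. u w *\<^sub>R \<gamma> w)"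
proof -
  have fv: "finite (vertices K)" using sc unfolding simplicial_complex_def vertices_def by auto
  have sv: "s \<subseteq> vertices K" using s unfolding vertices_def by auto
  have "pl_map K \<gamma> x = (\<Sum>v\<in>vertices K. (if v \<in> s then u v *\<^sub>R \<gamma> v else 0))"
    unfolding pl_map_def by (rule sum.cong) (auto simp: bary_eq[OF sc s u])
  also have "\<dots> = (\<Sum>v\<in>vertices K \<inter> s. u v *\<^sub>R \<gamma> v)" using fv by (simp add: sum.inter_restrict)
  also have "vertices K \<inter> s = s" using sv by auto
  finally show ?thesis .
qed




definition amap :: "('a::real_vector \<Rightarrow> 'b::real_vector) \<Rightarrow> bool" where
  "amap f \<longleftrightarrow> (\<exists>c L. linear L \<and> f = (\<lambda>x. c + L x))"

lemma amap_comb: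
  assumes "amap f" "sum u s = 1"
  shows "f (\<Sum>w\<in>s. u w *\<^sub>R w) = (\<Sum>w\<in>s. u w *\<^sub>R f w)"
proof -
  obtain c L where L: "linear L" "f = (\<lambda>x. c + L x)" using assms(1) amap_def by blast
  have "f (\<Sum>w\<in>s. u w *\<^sub>R w) = c + (\<Sum>w\<in>s. u w *\<^sub>R L w)"
    using L by (simp add: linear_sum linear_scale)
  also have "\<dots> = (\<Sum>w\<in>s. u w) *\<^sub>R c + (\<Sum>w\<in>s. u w *\<^sub>R L w)" using assms(2) by simp
  also have "\<dots> = (\<Sum>w\<in>s. u w *\<^sub>R (c + L w))"
    by (simp add: scaleR_add_right sum.distrib scaleR_sum_left)
  finally show ?thesis using L by simp
qed

lemma amap_diff:
  assumes "amap f" shows "\<exists>L. linear L \<and> (\<forall>x y. f x - f y = L (x - y))"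
proof -
  obtain c L where L: "linear L" "f = (\<lambda>x. c + L x)" using assms amap_def by blast
  then show ?thesis by (intro exI[of _ L]) (simp add: linear_diff)
qed

lemma amap_comp: "amap f \<Longrightarrow> amap k \<Longrightarrow> amap (k \<circ> f)"
proof -
  assume "amap f" "amap k"
  then obtain c1 L1 c2 L2 where L: "linear L1" "f = (\<lambda>x. c1 + L1 x)" "linear L2" "k = (\<lambda>x. c2 + L2 x)"
    unfolding amap_def by blast
  have "k \<circ> f = (\<lambda>x. (c2 + L2 c1) + (L2 \<circ> L1) x)" using L by (auto simp: linear_add)
  moreover have "linear (L2 \<circ> L1)" using L linear_compose by blast
  ultimately show ?thesis unfolding amap_def by blast
qed

lemma amap_id: "amap id"
  unfolding amap_def by (intro exI[of _ 0] exI[of _ id]) (auto simp: linear_id)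

lemma amap_cont:
  fixes f :: "'a::euclidean_space \<Rightarrow> 'b::real_normed_vector"
  assumes "amap f" shows "continuous_on S f"
proof -
  obtain c L where L: "linear L" "f = (\<lambda>x. c + L x)" using assms amap_def by blast
  have "continuous_on S L" using L(1) by (simp add: linear_continuous_on linear_conv_bounded_linear)
  then show ?thesis using L by (auto intro!: continuous_intros)
qed

lemma amap_aff_dim:
  fixes f :: "'a::euclidean_space \<Rightarrow> 'b::euclidean_space"
  assumes "amap f" shows "aff_dim (f ` S) \<le> aff_dim S"
proof -
  obtain c L where L: "linear L" "f = (\<lambda>x. c + L x)" using assms amap_def by blast
  have "f ` S = (+) c ` (L ` S)" using L by (auto simp: image_image)
  then show ?thesis using aff_dim_linear_image_le[OF L(1)] by (simp add: aff_dim_translation_eq)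
qed

lemma amap_convex:
  assumes "amap f" "convex S" shows "convex (f ` S)"
proof -
  obtain c L where L: "linear L" "f = (\<lambda>x. c + L x)" using assms amap_def by blast
  have "f ` S = (+) c ` (L ` S)" using L by (auto simp: image_image)
  then show ?thesis using convex_linear_image[OF L(1) assms(2)] convex_translation by metis
qed

lemma convex_sum_hull:
  assumes "finite s" "\<forall>w\<in>s. 0 \<le> u w" "sum u s = 1" "\<forall>w\<in>s. y w \<in> convex hull A"
  shows "(\<Sum>w\<in>s. u w *\<^sub>R y w) \<in> convex hull A"
  using convex_sum[OF assms(1) convex_convex_hull] assms by blast

lemma amap_hull:
  assumes "amap f" "finite s" "x \<in> convex hull s"
  shows "f x \<in> convex hull (f ` s)"
proof -
  obtain u where u: "rep s x u" using assms hull_rep by blast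
  have "f x = (\<Sum>w\<in>s. u w *\<^sub>R f w)" using u amap_comb[OF assms(1)] unfolding rep_def by blast
  also have "\<dots> \<in> convex hull (f ` s)"
    using u assms(2) by (intro convex_sum_hull) (auto simp: rep_def hull_inc)
  finally show ?thesis .
qed

lemma amap_extend:
  fixes s :: "'a::real_vector set" and \<phi> :: "'a \<Rightarrow> 'b::real_vector"
  assumes "finite s" "\<not> affine_dependent s"
  shows "\<exists>f. amap f \<and> (\<forall>w\<in>s. f w = \<phi> w)"
proof (cases "s = {}")
  case True
  then show ?thesis by (intro exI[of _ "\<lambda>x. 0"]) (auto simp: amap_def intro!: exI[of _ 0] exI[of _ "\<lambda>x. 0"] linear_zero)
next
  case False
  then obtain a where a: "a \<in> s" by blast
  have "insert a (s - {a}) = s" using a by blast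
  then have "\<not> dependent ((+) (- a) ` (s - {a}))"
    using assms(2) affine_dependent_iff_dependent[of a "s - {a}"] by simp
  then obtain L where L: "linear L" "\<forall>b\<in>(+) (- a) ` (s - {a}). L b = \<phi> (a + b) - \<phi> a"
    using linear_independent_extend[of "(+) (- a) ` (s - {a})" "\<lambda>b. \<phi> (a + b) - \<phi> a"] by blast
  define f where "f = (\<lambda>x. (\<phi> a - L a) + L x)"
  have "amap f" unfolding amap_def f_def using L(1) by blast
  moreover have "f w = \<phi> w" if "w \<in> s" for w
  proof (cases "w = a")
    case True then show ?thesis by (simp add: f_def)
  next
    case False
    then have "- a + w \<in> (+) (- a) ` (s - {a})" using that by auto
    then have "L (- a + w) = \<phi> (a + (- a + w)) - \<phi> a" using L(2) by blast
    then have "L (- a + w) = \<phi> w - \<phi> a" by simp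
    moreover have "L w = L (- a + w) + L a" using L(1) by (simp add: linear_add[symmetric])
    ultimately show ?thesis by (simp add: f_def)
  qed
  ultimately show ?thesis by blast
qed

lemma rescale:
  assumes "convex A" "p \<in> A" "q \<in> A" "0 \<le> r" "r \<le> c"
  shows "\<exists>p'\<in>A. \<exists>q'\<in>A. r *\<^sub>R (q - p) = c *\<^sub>R (q' - p')"
proof (cases "c = 0")
  case True
  then show ?thesis using assms by (intro bexI[of _ p]) auto
next
  case False
  define l where "l = r / c"
  have l: "0 \<le> l" "l \<le> 1" using assms False by (auto simp: l_def divide_simps)
  define q' where "q' = (1 - l) *\<^sub>R p + l *\<^sub>R q"
  have "q' \<in> A" using convexD[OF assms(1) assms(2,3)] l unfolding q'_def by simp
  moreover have "c *\<^sub>R (q' - p) = r *\<^sub>R (q - p)"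
    using False unfolding q'_def l_def by (simp add: algebra_simps)
  ultimately show ?thesis using assms(2) by (intro bexI[of _ p] bexI[of _ q']) auto
qed




lemma lengthen:
  assumes fS: "finite S" and a: "rep S p a" and b: "rep S q b"
    and k0: "k0 \<le> (\<Sum>v\<in>S. min (a v) (b v))" "0 < k0"
  shows "\<exists>p'\<in>convex hull S. \<exists>q'\<in>convex hull S. q - p = (1 - k0) *\<^sub>R (q' - p')"
proof -
  define m where "m v = min (a v) (b v)" for v
  define k where "k = (\<Sum>v\<in>S. m v)"
  have a0: "\<forall>v\<in>S. 0 \<le> a v" "sum a S = 1" "(\<Sum>v\<in>S. a v *\<^sub>R v) = p" using a rep_def by auto
  have b0: "\<forall>v\<in>S. 0 \<le> b v" "sum b S = 1" "(\<Sum>v\<in>S. b v *\<^sub>R v) = q" using b rep_def by auto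
  have pS: "p \<in> convex hull S" using a fS hull_rep by blast
  have ma: "\<forall>v\<in>S. m v \<le> a v" "\<forall>v\<in>S. m v \<le> b v" "\<forall>v\<in>S. 0 \<le> m v" using a0 b0 by (auto simp: m_def)
  have "k \<le> sum a S" unfolding k_def using ma by (intro sum_mono) auto
  then have k1: "k \<le> 1" using a0 by simp
  have kk0: "k0 \<le> k" using k0 by (simp add: k_def m_def)
  show ?thesis
  proof (cases "k = 1")
    case True
    have "sum (\<lambda>v. a v - m v) S = 0" using True a0 by (simp add: sum_subtractf k_def)
    then have "\<forall>v\<in>S. a v - m v = 0" using sum_nonneg_eq_0_iff[OF fS, of "\<lambda>v. a v - m v"] ma by simp
    then have am: "\<forall>v\<in>S. a v = m v" by simp
    have "sum (\<lambda>v. b v - m v) S = 0" using True b0 by (simp add: sum_subtractf k_def)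
    then have "\<forall>v\<in>S. b v - m v = 0" using sum_nonneg_eq_0_iff[OF fS, of "\<lambda>v. b v - m v"] ma by simp
    then have bm: "\<forall>v\<in>S. b v = m v" by simp
    have "(\<Sum>v\<in>S. a v *\<^sub>R v) = (\<Sum>v\<in>S. b v *\<^sub>R v)" using am bm by (intro sum.cong) auto
    then have "p = q" using a0(3) b0(3) by simp
    then show ?thesis using pS by (intro bexI[of _ p]) auto
  next
    case False
    then have k1': "k < 1" using k1 by simp
    define a' where "a' v = (a v - m v) / (1 - k)" for v
    define b' where "b' v = (b v - m v) / (1 - k)" for v
    define p' where "p' = (\<Sum>v\<in>S. a' v *\<^sub>R v)"
    define q' where "q' = (\<Sum>v\<in>S. b' v *\<^sub>R v)"
    have "sum a' S = (sum a S - k) / (1 - k)"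
      unfolding a'_def k_def by (simp add: sum_divide_distrib[symmetric] sum_subtractf)
    then have sa: "sum a' S = 1" using a0 k1' by simp
    have "sum b' S = (sum b S - k) / (1 - k)"
      unfolding b'_def k_def by (simp add: sum_divide_distrib[symmetric] sum_subtractf)
    then have sb: "sum b' S = 1" using b0 k1' by simp
    have p'S: "p' \<in> convex hull S" unfolding p'_def
      using sa ma k1' fS by (intro convex_sum_hull) (auto simp: a'_def hull_inc)
    have q'S: "q' \<in> convex hull S" unfolding q'_def
      using sb ma k1' fS by (intro convex_sum_hull) (auto simp: b'_def hull_inc)
    have "q' - p' = (\<Sum>v\<in>S. (b' v - a' v) *\<^sub>R v)"
      unfolding p'_def q'_def by (simp add: sum_subtractf scaleR_diff_left)
    also have "\<dots> = (\<Sum>v\<in>S. (1 / (1 - k)) *\<^sub>R ((b v - a v) *\<^sub>R v))"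
      by (rule sum.cong) (auto simp: a'_def b'_def diff_divide_distrib)
    also have "\<dots> = (1 / (1 - k)) *\<^sub>R (q - p)"
      using a0(3) b0(3) by (simp add: scaleR_sum_right[symmetric] sum_subtractf scaleR_diff_left)
    finally have "(1 - k) *\<^sub>R (q' - p') = q - p" using k1' by simp
    moreover obtain p'' q'' where "p'' \<in> convex hull S" "q'' \<in> convex hull S"
      "(1 - k) *\<^sub>R (q' - p') = (1 - k0) *\<^sub>R (q'' - p'')"
      using rescale[OF convex_convex_hull p'S q'S, of "1 - k" "1 - k0"] k1' kk0 by auto
    ultimately show ?thesis by metis
  qed
qed

lemma contract_gen:
  fixes t S :: "'a::real_vector set"
  assumes ft: "finite t" "t \<noteq> {}" and fS: "finite S" and sub: "t \<subseteq> convex hull S"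
    and disj: "\<And>F1 F2. F1 \<subseteq> S \<Longrightarrow> F2 \<subseteq> S \<Longrightarrow> F1 \<noteq> {} \<Longrightarrow> F2 \<noteq> {} \<Longrightarrow> F1 \<inter> F2 = {} \<Longrightarrow>
        convex hull t \<inter> convex hull F1 = {} \<or> convex hull t \<inter> convex hull F2 = {}"
  shows "\<exists>c. 0 \<le> c \<and> c < 1 \<and> (\<forall>p\<in>convex hull t. \<forall>q\<in>convex hull t.
           \<exists>p'\<in>convex hull S. \<exists>q'\<in>convex hull S. q - p = c *\<^sub>R (q' - p'))"
proof -
  have "\<forall>w\<in>t. \<exists>b. rep S w b" using sub hull_rep fS by blast
  then obtain \<beta> where \<beta>: "\<And>w. w \<in> t \<Longrightarrow> rep S w (\<beta> w)" by metis
  define \<kappa> where "\<kappa> a b = (\<Sum>v\<in>S. min (a v) (b v))" for a b :: "'a \<Rightarrow> real"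
  have \<kappa>pos: "0 < \<kappa> (\<beta> w) (\<beta> w')" if w: "w\<in>t" "w'\<in>t" for w w'
  proof (rule ccontr)
    assume neg: "\<not> 0 < \<kappa> (\<beta> w) (\<beta> w')"
    have nn: "\<forall>v\<in>S. 0 \<le> min (\<beta> w v) (\<beta> w' v)" using \<beta>[OF w(1)] \<beta>[OF w(2)] unfolding rep_def by auto
    then have "0 \<le> \<kappa> (\<beta> w) (\<beta> w')" unfolding \<kappa>_def by (simp add: sum_nonneg)
    then have "\<kappa> (\<beta> w) (\<beta> w') = 0" using neg by simp
    then have "(\<Sum>v\<in>S. min (\<beta> w v) (\<beta> w' v)) = 0" unfolding \<kappa>_def .
    then have mz: "\<forall>v\<in>S. min (\<beta> w v) (\<beta> w' v) = 0"
      using sum_nonneg_eq_0_iff[OF fS, of "\<lambda>v. min (\<beta> w v) (\<beta> w' v)"] nn by simp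
    have face: "x \<in> convex hull {v\<in>S. 0 < \<beta> x v}" "{v\<in>S. 0 < \<beta> x v} \<noteq> {}" if "x \<in> t" for x
    proof -
      have r: "\<forall>v\<in>S. 0 \<le> \<beta> x v" "sum (\<beta> x) S = 1" "(\<Sum>v\<in>S. \<beta> x v *\<^sub>R v) = x"
        using \<beta>[OF that] rep_def by auto
      have s1: "sum (\<beta> x) {v\<in>S. 0 < \<beta> x v} = sum (\<beta> x) S"
        using fS r(1) by (intro sum.mono_neutral_left) force+
      have s2: "(\<Sum>v\<in>{v\<in>S. 0 < \<beta> x v}. \<beta> x v *\<^sub>R v) = (\<Sum>v\<in>S. \<beta> x v *\<^sub>R v)"
        using fS r(1) by (intro sum.mono_neutral_left) force+
      have "rep {v\<in>S. 0 < \<beta> x v} x (\<beta> x)" unfolding rep_def using s1 s2 r by auto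
      moreover have "finite {v\<in>S. 0 < \<beta> x v}" using fS by simp
      ultimately show "x \<in> convex hull {v\<in>S. 0 < \<beta> x v}" using hull_rep by blast
      show "{v\<in>S. 0 < \<beta> x v} \<noteq> {}"
        using s1 r(2) by (metis sum.empty zero_neq_one)
    qed
    have "{v\<in>S. 0 < \<beta> w v} \<inter> {v\<in>S. 0 < \<beta> w' v} = {}" using mz by fastforce
    then have "convex hull t \<inter> convex hull {v\<in>S. 0 < \<beta> w v} = {} \<or>
               convex hull t \<inter> convex hull {v\<in>S. 0 < \<beta> w' v} = {}"
      by (intro disj[OF _ _ face(2)[OF w(1)] face(2)[OF w(2)]]) auto
    moreover have "w \<in> convex hull t \<inter> convex hull {v\<in>S. 0 < \<beta> w v}"
      using face(1)[OF w(1)] hull_inc[OF w(1)] by blast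
    moreover have "w' \<in> convex hull t \<inter> convex hull {v\<in>S. 0 < \<beta> w' v}"
      using face(1)[OF w(2)] hull_inc[OF w(2)] by blast
    ultimately show False by blast
  qed
  define k0 where "k0 = Min ((\<lambda>(w,w'). \<kappa> (\<beta> w) (\<beta> w')) ` (t \<times> t))"
  have fin: "finite ((\<lambda>(w,w'). \<kappa> (\<beta> w) (\<beta> w')) ` (t \<times> t))" "(\<lambda>(w,w'). \<kappa> (\<beta> w) (\<beta> w')) ` (t \<times> t) \<noteq> {}"
    using ft by auto
  have k0pos: "0 < k0" unfolding k0_def using fin \<kappa>pos by (subst Min_gr_iff) auto
  have k0le: "k0 \<le> \<kappa> (\<beta> w) (\<beta> w')" if "w \<in> t" "w' \<in> t" for w w'
    unfolding k0_def using fin that by (intro Min_le) auto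
  obtain w0 where w0: "w0 \<in> t" using ft by blast
  have "\<kappa> (\<beta> w0) (\<beta> w0) = 1" using \<beta>[OF w0] unfolding \<kappa>_def rep_def by simp
  then have k01: "k0 \<le> 1" using k0le[OF w0 w0] by simp
  have main: "\<exists>p'\<in>convex hull S. \<exists>q'\<in>convex hull S. q - p = (1 - k0) *\<^sub>R (q' - p')"
    if p: "p \<in> convex hull t" and q: "q \<in> convex hull t" for p q
  proof -
    obtain \<alpha> where \<alpha>: "rep t p \<alpha>" using p hull_rep ft by blast
    obtain \<alpha>' where \<alpha>': "rep t q \<alpha>'" using q hull_rep ft by blast
    have A: "\<forall>w\<in>t. 0 \<le> \<alpha> w" "sum \<alpha> t = 1" "(\<Sum>w\<in>t. \<alpha> w *\<^sub>R w) = p" using \<alpha> rep_def by auto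
    have A': "\<forall>w\<in>t. 0 \<le> \<alpha>' w" "sum \<alpha>' t = 1" "(\<Sum>w\<in>t. \<alpha>' w *\<^sub>R w) = q" using \<alpha>' rep_def by auto
    have B: "\<forall>v\<in>S. 0 \<le> \<beta> w v" "sum (\<beta> w) S = 1" "(\<Sum>v\<in>S. \<beta> w v *\<^sub>R v) = w" if "w \<in> t" for w
      using \<beta>[OF that] rep_def by auto
    have repc: "rep S x (\<lambda>v. \<Sum>w\<in>t. \<gamma> w * \<beta> w v)"
      if G: "\<forall>w\<in>t. 0 \<le> \<gamma> w" "sum \<gamma> t = 1" "(\<Sum>w\<in>t. \<gamma> w *\<^sub>R w) = x" for \<gamma> x
    proof -
      have "(\<Sum>v\<in>S. \<Sum>w\<in>t. \<gamma> w * \<beta> w v) = (\<Sum>w\<in>t. \<Sum>v\<in>S. \<gamma> w * \<beta> w v)"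
        by (rule sum.swap)
      also have "\<dots> = (\<Sum>w\<in>t. \<gamma> w * (\<Sum>v\<in>S. \<beta> w v))" by (simp only: sum_distrib_left)
      also have "\<dots> = (\<Sum>w\<in>t. \<gamma> w)" using B by (intro sum.cong) auto
      finally have s1: "(\<Sum>v\<in>S. \<Sum>w\<in>t. \<gamma> w * \<beta> w v) = 1" using G by simp
      have "(\<Sum>v\<in>S. (\<Sum>w\<in>t. \<gamma> w * \<beta> w v) *\<^sub>R v) = (\<Sum>v\<in>S. \<Sum>w\<in>t. (\<gamma> w * \<beta> w v) *\<^sub>R v)"
        by (simp only: scaleR_sum_left)
      also have "\<dots> = (\<Sum>w\<in>t. \<Sum>v\<in>S. (\<gamma> w * \<beta> w v) *\<^sub>R v)" by (rule sum.swap)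
      also have "\<dots> = (\<Sum>w\<in>t. \<gamma> w *\<^sub>R (\<Sum>v\<in>S. \<beta> w v *\<^sub>R v))"
        by (simp only: scaleR_sum_right scaleR_scaleR)
      also have "\<dots> = (\<Sum>w\<in>t. \<gamma> w *\<^sub>R w)" using B by (intro sum.cong) auto
      finally have s2: "(\<Sum>v\<in>S. (\<Sum>w\<in>t. \<gamma> w * \<beta> w v) *\<^sub>R v) = x" using G by simp
      have s3: "\<forall>v\<in>S. 0 \<le> (\<Sum>w\<in>t. \<gamma> w * \<beta> w v)" using G B by (auto intro!: sum_nonneg)
      show ?thesis unfolding rep_def using s1 s2 s3 by auto
    qed
    define a where "a v = (\<Sum>w\<in>t. \<alpha> w * \<beta> w v)" for v
    define b where "b v = (\<Sum>w\<in>t. \<alpha>' w * \<beta> w v)" for v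
    have ra: "rep S p a" unfolding a_def using repc A by blast
    have rb: "rep S q b" unfolding b_def using repc A' by blast
    have mn: "(\<Sum>w\<in>t. \<Sum>w'\<in>t. \<alpha> w * \<alpha>' w' * min (\<beta> w v) (\<beta> w' v)) \<le> min (a v) (b v)"
      if v: "v \<in> S" for v
    proof -
      have e1: "(\<Sum>w'\<in>t. \<alpha> w * \<alpha>' w' * \<beta> w v) = \<alpha> w * \<beta> w v" for w
      proof -
        have "(\<Sum>w'\<in>t. \<alpha> w * \<alpha>' w' * \<beta> w v) = (\<Sum>w'\<in>t. (\<alpha> w * \<beta> w v) * \<alpha>' w')"
          by (intro sum.cong refl) (simp add: mult_ac)
        also have "\<dots> = (\<alpha> w * \<beta> w v) * (\<Sum>w'\<in>t. \<alpha>' w')" by (rule sum_distrib_left[symmetric])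
        finally show ?thesis using A' by simp
      qed
      have av: "a v = (\<Sum>w\<in>t. \<Sum>w'\<in>t. \<alpha> w * \<alpha>' w' * \<beta> w v)"
        unfolding a_def e1 ..
      have e2: "(\<Sum>w'\<in>t. \<alpha> w * \<alpha>' w' * \<beta> w' v) = \<alpha> w * (\<Sum>w'\<in>t. \<alpha>' w' * \<beta> w' v)" for w
      proof -
        have "(\<Sum>w'\<in>t. \<alpha> w * \<alpha>' w' * \<beta> w' v) = (\<Sum>w'\<in>t. \<alpha> w * (\<alpha>' w' * \<beta> w' v))"
          by (intro sum.cong refl) (simp add: mult_ac)
        also have "\<dots> = \<alpha> w * (\<Sum>w'\<in>t. \<alpha>' w' * \<beta> w' v)" by (rule sum_distrib_left[symmetric])
        finally show ?thesis .
      qed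
      have "(\<Sum>w\<in>t. \<Sum>w'\<in>t. \<alpha> w * \<alpha>' w' * \<beta> w' v) = (\<Sum>w\<in>t. \<alpha> w * (\<Sum>w'\<in>t. \<alpha>' w' * \<beta> w' v))"
        unfolding e2 ..
      also have "\<dots> = (\<Sum>w\<in>t. \<alpha> w) * (\<Sum>w'\<in>t. \<alpha>' w' * \<beta> w' v)" by (rule sum_distrib_right[symmetric])
      also have "\<dots> = b v" unfolding b_def using A by simp
      finally have bv: "b v = (\<Sum>w\<in>t. \<Sum>w'\<in>t. \<alpha> w * \<alpha>' w' * \<beta> w' v)" by simp
      have m1: "(\<Sum>w\<in>t. \<Sum>w'\<in>t. \<alpha> w * \<alpha>' w' * min (\<beta> w v) (\<beta> w' v)) \<le> (\<Sum>w\<in>t. \<Sum>w'\<in>t. \<alpha> w * \<alpha>' w' * \<beta> w v)"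
        using A A' by (intro sum_mono mult_left_mono) auto
      have m2: "(\<Sum>w\<in>t. \<Sum>w'\<in>t. \<alpha> w * \<alpha>' w' * min (\<beta> w v) (\<beta> w' v)) \<le> (\<Sum>w\<in>t. \<Sum>w'\<in>t. \<alpha> w * \<alpha>' w' * \<beta> w' v)"
        using A A' by (intro sum_mono mult_left_mono) auto
      show ?thesis using av bv m1 m2 by simp
    qed
    have e3: "(\<Sum>w'\<in>t. \<alpha> w * \<alpha>' w' * k0) = \<alpha> w * k0" for w
    proof -
      have "(\<Sum>w'\<in>t. \<alpha> w * \<alpha>' w' * k0) = (\<Sum>w'\<in>t. (\<alpha> w * k0) * \<alpha>' w')"
        by (intro sum.cong refl) (simp add: mult_ac)
      also have "\<dots> = (\<alpha> w * k0) * (\<Sum>w'\<in>t. \<alpha>' w')" by (rule sum_distrib_left[symmetric])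
      finally show ?thesis using A' by simp
    qed
    have "(\<Sum>w\<in>t. \<Sum>w'\<in>t. \<alpha> w * \<alpha>' w' * k0) = (\<Sum>w\<in>t. \<alpha> w * k0)" unfolding e3 ..
    also have "\<dots> = (\<Sum>w\<in>t. \<alpha> w) * k0" by (rule sum_distrib_right[symmetric])
    finally have "(\<Sum>w\<in>t. \<Sum>w'\<in>t. \<alpha> w * \<alpha>' w' * k0) = (\<Sum>w\<in>t. \<alpha> w) * k0" .
    then have "k0 = (\<Sum>w\<in>t. \<Sum>w'\<in>t. \<alpha> w * \<alpha>' w' * k0)" using A by simp
    also have "\<dots> \<le> (\<Sum>w\<in>t. \<Sum>w'\<in>t. \<alpha> w * \<alpha>' w' * \<kappa> (\<beta> w) (\<beta> w'))"
      using A A' k0le by (intro sum_mono mult_left_mono) auto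
    also have "\<dots> = (\<Sum>w\<in>t. \<Sum>w'\<in>t. \<Sum>v\<in>S. \<alpha> w * \<alpha>' w' * min (\<beta> w v) (\<beta> w' v))"
      unfolding \<kappa>_def by (simp only: sum_distrib_left)
    also have "\<dots> = (\<Sum>w\<in>t. \<Sum>v\<in>S. \<Sum>w'\<in>t. \<alpha> w * \<alpha>' w' * min (\<beta> w v) (\<beta> w' v))"
      by (rule sum.cong[OF refl], rule sum.swap)
    also have "\<dots> = (\<Sum>v\<in>S. \<Sum>w\<in>t. \<Sum>w'\<in>t. \<alpha> w * \<alpha>' w' * min (\<beta> w v) (\<beta> w' v))"
      by (rule sum.swap)
    also have "\<dots> \<le> (\<Sum>v\<in>S. min (a v) (b v))" using mn by (intro sum_mono) auto
    finally show ?thesis using lengthen[OF fS ra rb _ k0pos] by blast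
  qed
  show ?thesis using main k0pos k01 by (intro exI[of _ "1 - k0"]) auto
qed




lemma amap_comb':
  assumes "amap f" "sum u s = 1"
  shows "f (\<Sum>w\<in>s. u w *\<^sub>R y w) = (\<Sum>w\<in>s. u w *\<^sub>R f (y w))"
proof -
  obtain c L where L: "linear L" "f = (\<lambda>x. c + L x)" using assms(1) amap_def by blast
  have "f (\<Sum>w\<in>s. u w *\<^sub>R y w) = c + (\<Sum>w\<in>s. u w *\<^sub>R L (y w))"
    using L by (simp add: linear_sum linear_scale)
  also have "\<dots> = (\<Sum>w\<in>s. u w) *\<^sub>R c + (\<Sum>w\<in>s. u w *\<^sub>R L (y w))" using assms(2) by simp
  also have "\<dots> = (\<Sum>w\<in>s. u w *\<^sub>R (c + L (y w)))"
    by (simp add: scaleR_add_right sum.distrib scaleR_sum_left)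
  finally show ?thesis using L by simp
qed

locale ctx =
  fixes K Ks :: "'a::euclidean_space set set" and \<gamma> :: "'a \<Rightarrow> 'a" and d :: nat
  assumes sds: "simplicial_dynamical_system Ks K \<gamma>"
    and nd: "non_degenerate Ks \<gamma>"
    and d1: "d \<ge> 1"
    and edim: "everywhere_dim d (polyhedron K)"
begin

abbreviation "X \<equiv> polyhedron K"
abbreviation "g \<equiv> pl_map Ks \<gamma>"
abbreviation "D \<equiv> dsimplices d Ks"
abbreviation "GG \<equiv> Grel d Ks \<gamma>"
abbreviation "Sig \<equiv> shift_space D GG"

lemma scKs: "simplicial_complex Ks" and scK: "simplicial_complex K" and XKs: "polyhedron Ks = X"
  and sub: "\<And>s. s \<in> Ks \<Longrightarrow> \<exists>S\<in>K. convex hull s \<subseteq> convex hull S"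
  using sds unfolding simplicial_dynamical_system_def proper_subdivision_def subdivision_def by auto

lemma proper: "s \<in> Ks \<Longrightarrow> S1 \<in> K \<Longrightarrow> S2 \<in> K \<Longrightarrow> convex hull S1 \<inter> convex hull S2 = {} \<Longrightarrow>
   convex hull s \<inter> convex hull S1 = {} \<or> convex hull s \<inter> convex hull S2 = {}"
  using sds unfolding simplicial_dynamical_system_def proper_subdivision_def by blast

lemma gK: "s \<in> Ks \<Longrightarrow> \<gamma> ` s \<in> K"
  using sds unfolding simplicial_dynamical_system_def simplicial_map_def by blast

lemma card_g: "s \<in> Ks \<Longrightarrow> card (\<gamma> ` s) = card s"
  using nd unfolding non_degenerate_def by blast

lemma Ks_s: "s \<in> Ks \<Longrightarrow> finite s \<and> s \<noteq> {} \<and> \<not> affine_dependent s"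
  using sc_simplex[OF scKs] by blast
lemma K_s: "s \<in> K \<Longrightarrow> finite s \<and> s \<noteq> {} \<and> \<not> affine_dependent s"
  using sc_simplex[OF scK] by blast

lemma inj_g: "s \<in> Ks \<Longrightarrow> inj_on \<gamma> s"
  using card_g Ks_s inj_on_iff_eq_card by blast

lemma g_rep: "s \<in> Ks \<Longrightarrow> rep s x u \<Longrightarrow> g x = (\<Sum>w\<in>s. u w *\<^sub>R \<gamma> w)"
  by (rule pl_map_eq[OF scKs])

lemma g_hull: assumes "s \<in> Ks" "x \<in> convex hull s" shows "g x \<in> convex hull (\<gamma> ` s)"
proof -
  obtain u where u: "rep s x u" using assms Ks_s hull_rep by blast
  have "g x = (\<Sum>w\<in>s. u w *\<^sub>R \<gamma> w)" using g_rep[OF assms(1) u] .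
  also have "\<dots> \<in> convex hull (\<gamma> ` s)"
    using u Ks_s[OF assms(1)] by (intro convex_sum_hull) (auto simp: rep_def hull_inc)
  finally show ?thesis .
qed

lemma X_union: "X = \<Union> ((\<lambda>s. convex hull s) ` Ks)"
  using XKs unfolding polyhedron_def by simp

lemma hull_X: "s \<in> Ks \<Longrightarrow> convex hull s \<subseteq> X"
  using X_union by blast
lemma hull_XK: "S \<in> K \<Longrightarrow> convex hull S \<subseteq> X"
  unfolding polyhedron_def by blast

lemma g_X: assumes "x \<in> X" shows "g x \<in> X"
proof -
  obtain s where "s \<in> Ks" "x \<in> convex hull s" using assms X_union by blast
  then show ?thesis using g_hull hull_XK gK by blast
qed

definition fwd where "fwd t = (SOME f. amap f \<and> (\<forall>w\<in>t. f w = \<gamma> w))"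
definition bwd where "bwd t = (SOME k. amap k \<and> (\<forall>z\<in>\<gamma> ` t. k z = inv_into t \<gamma> z))"

lemma fwd: assumes "t \<in> Ks" shows "amap (fwd t) \<and> (\<forall>w\<in>t. fwd t w = \<gamma> w)"
proof -
  have "\<exists>f. amap f \<and> (\<forall>w\<in>t. f w = \<gamma> w)" using amap_extend Ks_s[OF assms] by blast
  then show ?thesis unfolding fwd_def by (rule someI_ex)
qed

lemma bwd: assumes "t \<in> Ks" shows "amap (bwd t) \<and> (\<forall>z\<in>\<gamma> ` t. bwd t z = inv_into t \<gamma> z)"
proof -
  have "\<exists>f. amap f \<and> (\<forall>z\<in>\<gamma> ` t. f z = inv_into t \<gamma> z)" using amap_extend K_s[OF gK[OF assms]] by blast
  then show ?thesis unfolding bwd_def by (rule someI_ex)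
qed

lemma g_fwd: assumes "t \<in> Ks" "x \<in> convex hull t" shows "g x = fwd t x"
proof -
  obtain u where u: "rep t x u" using assms Ks_s hull_rep by blast
  have "g x = (\<Sum>w\<in>t. u w *\<^sub>R \<gamma> w)" using g_rep[OF assms(1) u] .
  also have "\<dots> = (\<Sum>w\<in>t. u w *\<^sub>R fwd t w)" using fwd[OF assms(1)] by simp
  also have "\<dots> = fwd t (\<Sum>w\<in>t. u w *\<^sub>R w)"
    using amap_comb[OF conjunct1[OF fwd[OF assms(1)]], of u t] u unfolding rep_def by simp
  also have "(\<Sum>w\<in>t. u w *\<^sub>R w) = x" using u unfolding rep_def by simp
  finally show ?thesis .
qed

lemma bwd_g: assumes "t \<in> Ks" "x \<in> convex hull t" shows "bwd t (g x) = x"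
proof -
  obtain u where u: "rep t x u" using assms Ks_s hull_rep by blast
  have "bwd t (g x) = bwd t (\<Sum>w\<in>t. u w *\<^sub>R \<gamma> w)" using g_rep[OF assms(1) u] by simp
  also have "\<dots> = (\<Sum>w\<in>t. u w *\<^sub>R bwd t (\<gamma> w))"
    using amap_comb'[OF conjunct1[OF bwd[OF assms(1)]], of u t \<gamma>] u unfolding rep_def by simp
  also have "\<dots> = (\<Sum>w\<in>t. u w *\<^sub>R w)"
    using bwd[OF assms(1)] inv_into_f_f[OF inj_g[OF assms(1)]] by (intro sum.cong) auto
  also have "\<dots> = x" using u unfolding rep_def by simp
  finally show ?thesis .
qed

lemma bwd_hull: assumes "t \<in> Ks" "y \<in> convex hull (\<gamma> ` t)"
  shows "bwd t y \<in> convex hull t \<and> g (bwd t y) = y"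
proof -
  have fin: "finite (\<gamma> ` t)" using Ks_s[OF assms(1)] by simp
  obtain b where b: "rep (\<gamma> ` t) y b" using assms(2) fin hull_rep by blast
  have yb: "y = (\<Sum>z\<in>\<gamma> ` t. b z *\<^sub>R z)" "sum b (\<gamma> ` t) = 1" using b unfolding rep_def by auto
  have "bwd t y = (\<Sum>z\<in>\<gamma> ` t. b z *\<^sub>R bwd t z)"
    using amap_comb[OF conjunct1[OF bwd[OF assms(1)]] yb(2)] yb(1) by simp
  also have "\<dots> = (\<Sum>z\<in>\<gamma> ` t. b z *\<^sub>R inv_into t \<gamma> z)"
    using bwd[OF assms(1)] by (intro sum.cong refl) auto
  finally have e: "bwd t y = (\<Sum>z\<in>\<gamma> ` t. b z *\<^sub>R inv_into t \<gamma> z)" .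
  have inh: "bwd t y \<in> convex hull t" unfolding e using b fin
    by (intro convex_sum_hull) (auto simp: rep_def hull_inc inv_into_into)
  have "g (bwd t y) = fwd t (bwd t y)" using g_fwd[OF assms(1) inh] .
  also have "\<dots> = (\<Sum>z\<in>\<gamma> ` t. b z *\<^sub>R fwd t (inv_into t \<gamma> z))"
    unfolding e using amap_comb'[OF conjunct1[OF fwd[OF assms(1)]] yb(2)] by simp
  also have "\<dots> = (\<Sum>z\<in>\<gamma> ` t. b z *\<^sub>R z)"
    using fwd[OF assms(1)] by (intro sum.cong) (auto simp: inv_into_into f_inv_into_f)
  also have "\<dots> = y" using yb(1) by simp
  finally show ?thesis using inh by simp
qed

lemma closed_hull: "finite (s::'a set) \<Longrightarrow> closed (convex hull s)"
  by (intro compact_imp_closed finite_imp_compact_convex_hull)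

lemma g_cont: "continuous_on X g"
proof -
  have "continuous_on (\<Union> ((\<lambda>s. convex hull s) ` Ks)) g"
  proof (rule continuous_on_closed_Union)
    show "finite Ks" using sc_finite[OF scKs] .
    show "closed (convex hull s)" if "s \<in> Ks" for s using closed_hull Ks_s that by blast
    show "continuous_on (convex hull s) g" if "s \<in> Ks" for s
      by (rule continuous_on_eq[OF amap_cont[OF conjunct1[OF fwd[OF that]]]]) (simp add: g_fwd[OF that])
  qed
  then show ?thesis using X_union by simp
qed

lemma gpow: "continuous_on X (g ^^ n) \<and> (\<forall>x\<in>X. (g ^^ n) x \<in> X)"
proof (induction n)
  case 0 then show ?case by (simp add: continuous_on_id)
next
  case (Suc n)
  have "continuous_on X (g \<circ> (g ^^ n))"
    using Suc g_cont by (intro continuous_on_compose) (auto intro: continuous_on_subset)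
  then show ?case using Suc g_X by simp
qed

lemma compact_X: "compact X"
proof -
  have "compact (\<Union> ((\<lambda>s. convex hull s) ` Ks))"
    using sc_finite[OF scKs] Ks_s finite_imp_compact_convex_hull by (intro compact_Union) auto
  then show ?thesis using X_union by simp
qed

end



context ctx begin

lemma aff_dim_ind: "finite (s::'a set) \<Longrightarrow> \<not> affine_dependent s \<Longrightarrow> aff_dim s = int (card s) - 1"
proof -
  assume "\<not> affine_dependent s"
  then have "int (card s) = aff_dim s + 1" by (rule aff_dim_affine_independent)
  then show ?thesis by simp
qed

lemma hull_aff_dim: "finite (s::'a set) \<Longrightarrow> \<not> affine_dependent s \<Longrightarrow> aff_dim (convex hull s) = int (card s) - 1"
  using aff_dim_ind by (simp add: aff_dim_convex_hull)

lemma edimF: obtains F where "finite F" "\<And>T. T \<in> F \<Longrightarrow> (int d) simplex T" "X = \<Union>F"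
  using edim unfolding everywhere_dim_def by blast

lemma K_card: assumes S: "S \<in> K" shows "card S \<le> d + 1"
proof (rule ccontr)
  assume big: "\<not> card S \<le> d + 1"
  obtain F where F: "finite F" "\<And>T. T \<in> F \<Longrightarrow> (int d) simplex T" "X = \<Union>F" using edim unfolding everywhere_dim_def by blast
  let ?U = "convex hull S"
  let ?S = "(\<lambda>T. ?U \<inter> T) ` F"
  have eq: "\<Union>{C \<in> ?S. aff_dim C = aff_dim ?U} = ?U"
  proof (rule convex_Union_fulldim_cells)
    show "finite ?S" using F by simp
    show "closed C" if C: "C \<in> ?S" for C
    proof -
      obtain T where T: "T \<in> F" "C = ?U \<inter> T" using C by blast
      have "closed T" using closed_simplex[OF F(2)[OF T(1)]] .
      moreover have "closed ?U" using closed_hull K_s[OF S] by blast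
      ultimately show ?thesis using T(2) by (simp add: closed_Int)
    qed
    show "convex C" if "C \<in> ?S" for C
      using that F(2) convex_simplex by (auto intro!: convex_Int)
    show "\<Union> ?S = ?U" using hull_XK[OF S] F(3) by blast
  qed simp
  have lt: "aff_dim C < aff_dim ?U" if C: "C \<in> ?S" for C
  proof -
    obtain T where T: "T \<in> F" "C = ?U \<inter> T" using C by blast
    have "aff_dim C \<le> aff_dim T" using T aff_dim_subset[of C T] by blast
    also have "\<dots> = int d" using F(2)[OF T(1)] aff_dim_simplex by blast
    also have "\<dots> < aff_dim ?U" using hull_aff_dim aff_dim_ind K_s[OF S] big by simp
    finally show ?thesis .
  qed
  have e2: "{C \<in> ?S. aff_dim C = aff_dim ?U} = {}"
  proof (rule ccontr)
    assume "{C \<in> ?S. aff_dim C = aff_dim ?U} \<noteq> {}"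
    then obtain C where C: "C \<in> ?S" "aff_dim C = aff_dim ?U" by blast
    have "aff_dim C < aff_dim ?U" by (rule lt[OF C(1)])
    then show False using C(2) by simp
  qed
  have "?U = {}" using eq unfolding e2 by simp
  then show False using K_s[OF S] by simp
qed

lemma Ks_card: assumes t: "t \<in> Ks" shows "card t \<le> d + 1"
proof -
  obtain S where S: "S \<in> K" "convex hull t \<subseteq> convex hull S" using sub[OF t] by blast
  have "int (card t) - 1 \<le> int (card S) - 1"
    using aff_dim_subset[OF S(2)] hull_aff_dim aff_dim_ind Ks_s[OF t] K_s[OF S(1)] by simp
  then show ?thesis using K_card[OF S(1)] by simp
qed

lemma D_iff: "t \<in> D \<longleftrightarrow> t \<in> Ks \<and> card t = d + 1"
  unfolding dsimplices_def by simp

lemma gD: "t \<in> D \<Longrightarrow> \<gamma> ` t \<in> K \<and> card (\<gamma> ` t) = d + 1"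
  using D_iff gK card_g by auto

lemma fulldim_cover:
  assumes C: "closed C" "convex C" "C \<subseteq> X" "aff_dim C = int d" and y: "y \<in> C"
  obtains t where "t \<in> D" "y \<in> convex hull t" "aff_dim (convex hull t \<inter> C) = int d"
proof -
  let ?S = "(\<lambda>t. convex hull t \<inter> C) ` Ks"
  have "\<Union>{C' \<in> ?S. aff_dim C' = aff_dim C} = C"
  proof (rule convex_Union_fulldim_cells)
    show "finite ?S" using sc_finite[OF scKs] by simp
    show "closed C'" if "C' \<in> ?S" for C'
      using that closed_hull Ks_s C(1) by auto
    show "convex C'" if "C' \<in> ?S" for C'
      using that C(2) by (auto intro!: convex_Int)
    show "\<Union> ?S = C" using X_union C(3) by blast
  qed (use C in auto)
  then obtain t where t: "t \<in> Ks" "y \<in> convex hull t" "aff_dim (convex hull t \<inter> C) = int d"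
    using y C(4) by auto
  have "int d \<le> aff_dim (convex hull t)" using t(3) aff_dim_subset[of "convex hull t \<inter> C"] by auto
  then have "d + 1 \<le> card t" using hull_aff_dim aff_dim_ind Ks_s[OF t(1)] by simp
  then have "t \<in> D" using Ks_card[OF t(1)] t(1) D_iff by simp
  then show ?thesis using that t by blast
qed

lemma cover_X: assumes "x \<in> X" shows "\<exists>t\<in>D. x \<in> convex hull t"
proof -
  obtain F where F: "finite F" "\<And>T. T \<in> F \<Longrightarrow> (int d) simplex T" "X = \<Union>F" using edim unfolding everywhere_dim_def by blast
  then obtain T where T: "T \<in> F" "x \<in> T" using assms by blast
  have "closed T" "convex T" "T \<subseteq> X" "aff_dim T = int d"
    using closed_simplex[OF F(2)[OF T(1)]] convex_simplex[OF F(2)[OF T(1)]] aff_dim_simplex[OF F(2)[OF T(1)]]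
      F(3) T(1) by auto
  then obtain t where "t \<in> D" "x \<in> convex hull t" using fulldim_cover T(2) by metis
  then show ?thesis by blast
qed

lemma cover_T:
  assumes T: "T \<in> K" "card T = d + 1" and y: "y \<in> convex hull T"
  shows "\<exists>t\<in>D. y \<in> convex hull t \<and> convex hull t \<subseteq> convex hull T"
proof -
  have fT: "finite T" "\<not> affine_dependent T" using K_s[OF T(1)] by auto
  have adT: "aff_dim (convex hull T) = int d" using hull_aff_dim aff_dim_ind fT T(2) by simp
  obtain t where t: "t \<in> D" "y \<in> convex hull t" "aff_dim (convex hull t \<inter> convex hull T) = int d"
    using fulldim_cover[OF closed_hull[OF fT(1)] convex_convex_hull hull_XK[OF T(1)] adT y] by metis
  have tKs: "t \<in> Ks" using t(1) D_iff by simp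
  obtain S where S: "S \<in> K" "convex hull t \<subseteq> convex hull S" using sub[OF tKs] by blast
  have "convex hull t \<inter> convex hull T \<subseteq> convex hull (S \<inter> T)"
    using S(2) sc_inter[OF scK S(1) T(1)] by blast
  then have "int d \<le> aff_dim (convex hull (S \<inter> T))" using t(3) aff_dim_subset by metis
  moreover have "\<not> affine_dependent (S \<inter> T)" using fT(2) affine_dependent_subset by (metis inf_le2)
  ultimately have "d + 1 \<le> card (S \<inter> T)" using hull_aff_dim aff_dim_ind fT by simp
  then have "S \<inter> T = T" using card_subset_eq[OF fT(1), of "S \<inter> T"] card_mono[OF fT(1), of "S \<inter> T"] T(2) by auto
  then have "T \<subseteq> S" by blast
  then have "T = S" using card_subset_eq[of S T] K_s[OF S(1)] K_card[OF S(1)] T(2) card_mono[of S T] by auto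
  then show ?thesis using t S by blast
qed

definition cpair where "cpair t S = (SOME c. 0 \<le> c \<and> c < 1 \<and> (\<forall>p\<in>convex hull t. \<forall>q\<in>convex hull t.
           \<exists>p'\<in>convex hull S. \<exists>q'\<in>convex hull S. q - p = c *\<^sub>R (q' - p')))"

lemma cpair:
  assumes t: "t \<in> Ks" and S: "S \<in> K" and ts: "convex hull t \<subseteq> convex hull S"
  shows "0 \<le> cpair t S \<and> cpair t S < 1 \<and> (\<forall>p\<in>convex hull t. \<forall>q\<in>convex hull t.
           \<exists>p'\<in>convex hull S. \<exists>q'\<in>convex hull S. q - p = cpair t S *\<^sub>R (q' - p'))"
proof -
  have "\<exists>c. 0 \<le> c \<and> c < 1 \<and> (\<forall>p\<in>convex hull t. \<forall>q\<in>convex hull t.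
           \<exists>p'\<in>convex hull S. \<exists>q'\<in>convex hull S. q - p = c *\<^sub>R (q' - p'))"
  proof (rule contract_gen)
    show "finite t" "t \<noteq> {}" using Ks_s[OF t] by auto
    show "finite S" using K_s[OF S] by auto
    show "t \<subseteq> convex hull S" using ts hull_subset[of t convex] by blast
    fix F1 F2 assume F: "F1 \<subseteq> S" "F2 \<subseteq> S" "F1 \<noteq> {}" "F2 \<noteq> {}" "F1 \<inter> F2 = {}"
    have K12: "F1 \<in> K" "F2 \<in> K" using sc_face[OF scK S] F by auto
    have "convex hull F1 \<inter> convex hull F2 = {}" using sc_inter[OF scK K12] F(5) by simp
    then show "convex hull t \<inter> convex hull F1 = {} \<or> convex hull t \<inter> convex hull F2 = {}"
      using proper[OF t K12] by blast
  qed
  then show ?thesis unfolding cpair_def by (rule someI_ex)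
qed

definition "PS = {(t, S). t \<in> Ks \<and> S \<in> K \<and> convex hull t \<subseteq> convex hull S}"
definition "cc = Max (insert 0 ((\<lambda>(t, S). cpair t S) ` PS))"

lemma PS_fin: "finite PS"
proof -
  have "PS \<subseteq> Ks \<times> K" unfolding PS_def by auto
  then show ?thesis using sc_finite[OF scKs] sc_finite[OF scK] finite_subset by blast
qed

lemma cc: "0 \<le> cc" "cc < 1"
proof -
  show "0 \<le> cc" unfolding cc_def using PS_fin by simp
  have "\<forall>x\<in>insert 0 ((\<lambda>(t, S). cpair t S) ` PS). x < 1" using cpair unfolding PS_def by auto
  then show "cc < 1" unfolding cc_def using PS_fin by (subst Max_less_iff) auto
qed

lemma cpair_le: "t \<in> Ks \<Longrightarrow> S \<in> K \<Longrightarrow> convex hull t \<subseteq> convex hull S \<Longrightarrow> cpair t S \<le> cc"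
  unfolding cc_def using PS_fin by (intro Max_ge) (auto simp: PS_def)

lemma contract:
  assumes t: "t \<in> Ks" and S: "S \<in> K" and ts: "convex hull t \<subseteq> convex hull S"
    and p: "p \<in> convex hull t" and q: "q \<in> convex hull t" and r: "0 \<le> r"
  shows "\<exists>p'\<in>convex hull S. \<exists>q'\<in>convex hull S. r *\<^sub>R (q - p) = (r * cc) *\<^sub>R (q' - p')"
proof -
  obtain p' q' where pq: "p' \<in> convex hull S" "q' \<in> convex hull S" "q - p = cpair t S *\<^sub>R (q' - p')"
    using cpair[OF t S ts] p q by blast
  obtain p'' q'' where pq2: "p'' \<in> convex hull S" "q'' \<in> convex hull S"
    "cpair t S *\<^sub>R (q' - p') = cc *\<^sub>R (q'' - p'')"
    using rescale[OF convex_convex_hull pq(1,2), of "cpair t S" cc] cpair[OF t S ts] cpair_le[OF t S ts] by auto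
  have "r *\<^sub>R (q - p) = (r * cc) *\<^sub>R (q'' - p'')" using pq(3) pq2(3) by simp
  then show ?thesis using pq2 by blast
qed

definition "Pn n s = {x \<in> X. \<forall>i\<le>n. (g ^^ i) x \<in> convex hull (s i)}"

lemma Sig_D: "s \<in> Sig \<Longrightarrow> s i \<in> D"
  unfolding shift_space_def by blast
lemma Sig_G: "s \<in> Sig \<Longrightarrow> convex hull (s (Suc i)) \<subseteq> convex hull (\<gamma> ` s i)"
  unfolding shift_space_def Grel_def by blast
lemma Sig_Ks: "s \<in> Sig \<Longrightarrow> s i \<in> Ks"
  using Sig_D D_iff by blast
lemma shift_Sig: "s \<in> Sig \<Longrightarrow> shift s \<in> Sig"
  unfolding shift_space_def shift_def by auto

lemma Pn_shift: assumes "x \<in> Pn (Suc n) s" shows "g x \<in> Pn n (shift s)"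
proof -
  have "x \<in> X" using assms Pn_def by blast
  then have "g x \<in> X" using g_X by blast
  moreover have "(g ^^ i) (g x) \<in> convex hull (shift s i)" if "i \<le> n" for i
  proof -
    have "(g ^^ i) (g x) = (g ^^ Suc i) x" by (simp add: funpow_Suc_right del: funpow.simps)
    then show ?thesis using assms that unfolding Pn_def shift_def by auto
  qed
  ultimately show ?thesis unfolding Pn_def by blast
qed

lemma Pn_0: "x \<in> Pn n s \<Longrightarrow> x \<in> convex hull (s 0)"
  unfolding Pn_def by fastforce

lemma est:
  assumes "s \<in> Sig" "x \<in> Pn n s" "y \<in> Pn n s" "S \<in> K" "convex hull (s 0) \<subseteq> convex hull S"
  shows "\<exists>p'\<in>convex hull S. \<exists>q'\<in>convex hull S. x - y = (cc ^ (n + 1)) *\<^sub>R (q' - p')"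
  using assms
proof (induction n arbitrary: s x y S)
  case 0
  then show ?case using contract[OF Sig_Ks[OF 0(1)] 0(4,5) Pn_0[OF 0(3)] Pn_0[OF 0(2)], of 1] by simp
next
  case (Suc n)
  have s0: "s 0 \<in> Ks" using Sig_Ks[OF Suc(2)] .
  have S': "\<gamma> ` s 0 \<in> K" using gK[OF s0] .
  have sub': "convex hull (shift s 0) \<subseteq> convex hull (\<gamma> ` s 0)" using Sig_G[OF Suc(2), of 0] by (simp add: shift_def)
  obtain p' q' where pq: "p' \<in> convex hull (\<gamma> ` s 0)" "q' \<in> convex hull (\<gamma> ` s 0)"
    "g x - g y = (cc ^ (n + 1)) *\<^sub>R (q' - p')"
    using Suc.IH[OF shift_Sig[OF Suc(2)] Pn_shift[OF Suc(3)] Pn_shift[OF Suc(4)] S' sub'] by blast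
  obtain L where L: "linear L" "\<forall>a b. bwd (s 0) a - bwd (s 0) b = L (a - b)"
    using amap_diff bwd[OF s0] by blast
  have x: "x = bwd (s 0) (g x)" "y = bwd (s 0) (g y)"
    using bwd_g[OF s0] Pn_0[OF Suc(3)] Pn_0[OF Suc(4)] by auto
  have "x - y = L (g x - g y)" using x L(2) by metis
  also have "\<dots> = (cc ^ (n + 1)) *\<^sub>R L (q' - p')" using pq(3) L(1) by (simp add: linear_scale)
  also have "\<dots> = (cc ^ (n + 1)) *\<^sub>R (bwd (s 0) q' - bwd (s 0) p')" using L(2) by metis
  finally have e: "x - y = (cc ^ (n + 1)) *\<^sub>R (bwd (s 0) q' - bwd (s 0) p')" .
  have inh: "bwd (s 0) q' \<in> convex hull (s 0)" "bwd (s 0) p' \<in> convex hull (s 0)"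
    using bwd_hull[OF s0] pq by auto
  obtain p'' q'' where "p'' \<in> convex hull S" "q'' \<in> convex hull S"
    "(cc ^ (n + 1)) *\<^sub>R (bwd (s 0) q' - bwd (s 0) p') = (cc ^ (n + 1) * cc) *\<^sub>R (q'' - p'')"
    using contract[OF s0 Suc(5,6) inh(2) inh(1), of "cc ^ (n + 1)"] cc by auto
  then show ?case using e by (intro bexI[of _ p''] bexI[of _ q'']) (auto simp: mult.commute)
qed

definition "MM = (SOME M. \<forall>x\<in>X. norm x \<le> M)"
lemma MM: "x \<in> X \<Longrightarrow> norm x \<le> MM"
proof -
  have "\<exists>M. \<forall>x\<in>X. norm x \<le> M" using compact_X compact_imp_bounded bounded_iff by metis
  then have "\<forall>x\<in>X. norm x \<le> MM" unfolding MM_def by (rule someI_ex)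
  then show "x \<in> X \<Longrightarrow> norm x \<le> MM" by blast
qed

lemma est_norm:
  assumes "s \<in> Sig" "x \<in> Pn n s" "y \<in> Pn n s"
  shows "norm (x - y) \<le> cc ^ (n + 1) * (2 * MM)"
proof -
  obtain S where S: "S \<in> K" "convex hull (s 0) \<subseteq> convex hull S" using sub[OF Sig_Ks[OF assms(1)]] by blast
  obtain p' q' where pq: "p' \<in> convex hull S" "q' \<in> convex hull S" "x - y = (cc ^ (n + 1)) *\<^sub>R (q' - p')"
    using est[OF assms S] by blast
  have "norm q' \<le> MM" "norm p' \<le> MM" using MM hull_XK[OF S(1)] pq(1,2) by auto
  then have "norm (q' - p') \<le> 2 * MM" using norm_triangle_ineq4[of q' p'] by linarith
  then show ?thesis using pq(3) cc(1) by (simp add: mult_left_mono)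
qed

end



lemma amap_id2: "amap (\<lambda>x. x)"
  using amap_id by (simp add: id_def)

context ctx begin

primrec Gs :: "nat \<Rightarrow> (nat \<Rightarrow> 'a set) \<Rightarrow> 'a \<Rightarrow> 'a" where
  "Gs 0 s = id"
| "Gs (Suc n) s = bwd (s 0) \<circ> Gs n (shift s)"

primrec Fs :: "nat \<Rightarrow> (nat \<Rightarrow> 'a set) \<Rightarrow> 'a \<Rightarrow> 'a" where
  "Fs 0 s = id"
| "Fs (Suc n) s = Fs n (shift s) \<circ> fwd (s 0)"

lemma Gs: "s \<in> Sig \<Longrightarrow> amap (Gs n s) \<and> (\<forall>y\<in>convex hull (s n). Gs n s y \<in> Pn n s \<and> (g ^^ n) (Gs n s y) = y)"
proof (induction n arbitrary: s)
  case 0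
  then show ?case using amap_id2 hull_X[OF Sig_Ks[OF 0]] by (auto simp: Pn_def)
next
  case (Suc n)
  have s0: "s 0 \<in> Ks" using Sig_Ks[OF Suc(2)] .
  have IH: "amap (Gs n (shift s))" "\<And>y. y \<in> convex hull (shift s n) \<Longrightarrow>
      Gs n (shift s) y \<in> Pn n (shift s) \<and> (g ^^ n) (Gs n (shift s) y) = y"
    using Suc.IH[OF shift_Sig[OF Suc(2)]] by auto
  have "amap (Gs (Suc n) s)" using amap_comp[OF IH(1) conjunct1[OF bwd[OF s0]]] by simp
  moreover have "Gs (Suc n) s y \<in> Pn (Suc n) s \<and> (g ^^ Suc n) (Gs (Suc n) s y) = y"
    if y: "y \<in> convex hull (s (Suc n))" for y
  proof -
    define z where "z = Gs n (shift s) y"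
    have z: "z \<in> Pn n (shift s)" "(g ^^ n) z = y" using IH(2)[of y] y unfolding z_def shift_def by auto
    have "z \<in> convex hull (s 1)" using Pn_0[OF z(1)] by (simp add: shift_def)
    then have zh: "z \<in> convex hull (\<gamma> ` s 0)" using Sig_G[OF Suc(2), of 0] by auto
    define x where "x = bwd (s 0) z"
    have x: "x \<in> convex hull (s 0)" "g x = z" using bwd_hull[OF s0 zh] unfolding x_def by auto
    have gx: "(g ^^ Suc i) x = (g ^^ i) z" for i using x(2) by (simp add: funpow_Suc_right del: funpow.simps)
    have "x \<in> Pn (Suc n) s"
      unfolding Pn_def
    proof (intro CollectI conjI allI impI)
      show "x \<in> X" using x(1) hull_X[OF s0] by blast
      fix i assume i: "i \<le> Suc n"
      show "(g ^^ i) x \<in> convex hull (s i)"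
      proof (cases i)
        case 0 then show ?thesis using x by simp
      next
        case (Suc j)
        then show ?thesis using gx[of j] z(1) i unfolding Pn_def shift_def by auto
      qed
    qed
    moreover have "(g ^^ Suc n) x = y" using gx[of n] z(2) by simp
    ultimately show ?thesis unfolding x_def z_def by simp
  qed
  ultimately show ?case by blast
qed

lemma Gs_inv: "s \<in> Sig \<Longrightarrow> x \<in> Pn n s \<Longrightarrow> Gs n s ((g ^^ n) x) = x"
proof (induction n arbitrary: s x)
  case 0 then show ?case by simp
next
  case (Suc n)
  have "Gs n (shift s) ((g ^^ n) (g x)) = g x" using Suc.IH[OF shift_Sig[OF Suc(2)] Pn_shift[OF Suc(3)]] .
  moreover have "(g ^^ Suc n) x = (g ^^ n) (g x)" by (simp add: funpow_Suc_right del: funpow.simps)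
  ultimately show ?case using bwd_g[OF Sig_Ks[OF Suc(2)] Pn_0[OF Suc(3)]] by simp
qed

lemma Fs: "s \<in> Sig \<Longrightarrow> amap (Fs n s) \<and> (\<forall>x\<in>Pn n s. (g ^^ n) x = Fs n s x)"
proof (induction n arbitrary: s)
  case 0 then show ?case using amap_id2 by simp
next
  case (Suc n)
  have s0: "s 0 \<in> Ks" using Sig_Ks[OF Suc(2)] .
  have IH: "amap (Fs n (shift s))" "\<And>x. x \<in> Pn n (shift s) \<Longrightarrow> (g ^^ n) x = Fs n (shift s) x"
    using Suc.IH[OF shift_Sig[OF Suc(2)]] by auto
  have "amap (Fs (Suc n) s)" using amap_comp[OF conjunct1[OF fwd[OF s0]] IH(1)] by simp
  moreover have "(g ^^ Suc n) x = Fs (Suc n) s x" if x: "x \<in> Pn (Suc n) s" for x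
  proof -
    have "(g ^^ Suc n) x = (g ^^ n) (g x)" by (simp add: funpow_Suc_right del: funpow.simps)
    also have "\<dots> = Fs n (shift s) (g x)" using IH(2)[OF Pn_shift[OF x]] .
    also have "g x = fwd (s 0) x" using g_fwd[OF s0 Pn_0[OF x]] .
    finally show ?thesis by simp
  qed
  ultimately show ?case by blast
qed

lemma Pn_img: assumes "s \<in> Sig" shows "Pn n s = Gs n s ` (convex hull (s n))"
proof
  show "Gs n s ` (convex hull (s n)) \<subseteq> Pn n s" using Gs[OF assms] by blast
  show "Pn n s \<subseteq> Gs n s ` (convex hull (s n))"
  proof
    fix x assume x: "x \<in> Pn n s"
    then have "(g ^^ n) x \<in> convex hull (s n)" unfolding Pn_def by blast
    then show "x \<in> Gs n s ` (convex hull (s n))" using Gs_inv[OF assms x] by (metis image_eqI)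
  qed
qed

lemma Pn_props:
  assumes "s \<in> Sig"
  shows "Pn n s \<noteq> {}" "compact (Pn n s)" "convex (Pn n s)" "int d \<le> aff_dim (Pn n s)"
proof -
  have sn: "s n \<in> Ks" "card (s n) = d + 1" using Sig_D[OF assms] D_iff by auto
  have am: "amap (Gs n s)" using Gs[OF assms] by blast
  show "Pn n s \<noteq> {}" using Pn_img[OF assms] Ks_s[OF sn(1)] by auto
  show "compact (Pn n s)" unfolding Pn_img[OF assms]
    using amap_cont[OF am] Ks_s[OF sn(1)] finite_imp_compact_convex_hull compact_continuous_image by blast
  show "convex (Pn n s)" unfolding Pn_img[OF assms] using amap_convex[OF am] by simp
  have "convex hull (s n) \<subseteq> Fs n s ` Pn n s"
  proof
    fix y assume y: "y \<in> convex hull (s n)"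
    then have "Gs n s y \<in> Pn n s" "(g ^^ n) (Gs n s y) = y" using Gs[OF assms] by auto
    then show "y \<in> Fs n s ` Pn n s" using Fs[OF assms] by (metis image_eqI)
  qed
  then have "aff_dim (convex hull (s n)) \<le> aff_dim (Pn n s)"
    using aff_dim_subset amap_aff_dim Fs[OF assms] order_trans by metis
  then show "int d \<le> aff_dim (Pn n s)" using hull_aff_dim aff_dim_ind Ks_s[OF sn(1)] sn(2) by simp
qed

lemma Pn_mono: "m \<le> n \<Longrightarrow> Pn n s \<subseteq> Pn m s"
  unfolding Pn_def by auto

definition "R s = {x \<in> X. \<forall>i. (g ^^ i) x \<in> convex hull (s i)}"

lemma R_Pn: "x \<in> R s \<Longrightarrow> x \<in> Pn n s"
  unfolding R_def Pn_def by auto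

lemma lim_cc: "(\<lambda>n. cc ^ (n + 1) * (2 * MM)) \<longlonglongrightarrow> 0"
proof -
  have "(\<lambda>n. cc ^ n) \<longlonglongrightarrow> 0" using cc by (intro LIMSEQ_power_zero) auto
  then have "(\<lambda>n. cc ^ Suc n) \<longlonglongrightarrow> 0" by (rule LIMSEQ_Suc)
  then have "(\<lambda>n. cc ^ Suc n * (2 * MM)) \<longlonglongrightarrow> 0 * (2 * MM)" by (intro tendsto_mult tendsto_const)
  then show ?thesis by simp
qed

lemma small_le: assumes "\<And>n. a \<le> cc ^ (n + 1) * (2 * MM)" shows "a \<le> 0"
  using LIMSEQ_le_const[OF lim_cc] assms by blast

lemma R_unique: "s \<in> Sig \<Longrightarrow> x \<in> R s \<Longrightarrow> y \<in> R s \<Longrightarrow> x = y"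
proof -
  assume a: "s \<in> Sig" "x \<in> R s" "y \<in> R s"
  have "norm (x - y) \<le> 0" using est_norm[OF a(1) R_Pn[OF a(2)] R_Pn[OF a(3)]] small_le by blast
  then show "x = y" by simp
qed

lemma R_ex: assumes "s \<in> Sig" shows "\<exists>x. x \<in> R s"
proof -
  have "\<Inter> (range (\<lambda>n. Pn n s)) \<noteq> {}"
    using Pn_props[OF assms] Pn_mono by (intro compact_nest) auto
  then obtain x where x: "\<And>n. x \<in> Pn n s" by blast
  then have "x \<in> R s" unfolding R_def Pn_def by blast
  then show ?thesis by blast
qed

definition "hh s = (THE x. x \<in> R s)"

lemma hh: assumes "s \<in> Sig" shows "hh s \<in> R s" "\<And>x. x \<in> R s \<Longrightarrow> x = hh s"
proof -
  have "\<exists>!x. x \<in> R s" using R_ex[OF assms] R_unique[OF assms] by blast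
  then show "hh s \<in> R s" unfolding hh_def by (rule theI')
  fix x assume "x \<in> R s"
  then show "x = hh s" unfolding hh_def using the1_equality[OF \<open>\<exists>!x. x \<in> R s\<close>] by simp
qed

lemma hh_X: "s \<in> Sig \<Longrightarrow> hh s \<in> X"
  using hh unfolding R_def by blast

lemma hh_shift: assumes "s \<in> Sig" shows "hh (shift s) = g (hh s)"
proof -
  have "g (hh s) \<in> R (shift s)"
  proof -
    have "(g ^^ i) (g (hh s)) \<in> convex hull (shift s i)" for i
    proof -
      have e: "(g ^^ i) (g (hh s)) = (g ^^ Suc i) (hh s)" by (simp add: funpow_Suc_right del: funpow.simps)
      have "(g ^^ Suc i) (hh s) \<in> convex hull (s (Suc i))" using hh(1)[OF assms] unfolding R_def by blast
      then show ?thesis unfolding e shift_def .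
    qed
    then show ?thesis using g_X hh_X[OF assms] unfolding R_def by blast
  qed
  then show ?thesis using hh(2)[OF shift_Sig[OF assms]] by simp
qed

lemma hh_close:
  assumes "s \<in> Sig" "s' \<in> Sig" "\<forall>i\<le>n. s' i = s i"
  shows "dist (hh s') (hh s) \<le> cc ^ (n + 1) * (2 * MM)"
proof -
  have "Pn n s' = Pn n s" using assms(3) unfolding Pn_def by auto
  then have "hh s' \<in> Pn n s" "hh s \<in> Pn n s" using R_Pn hh(1) assms by blast+
  then show ?thesis using est_norm[OF assms(1)] by (simp add: dist_norm)
qed

end



context ctx begin

abbreviation "PT \<equiv> product_topology (\<lambda>_. discrete_topology D) (UNIV :: nat set)"

lemma Sig_top: "Sig \<subseteq> topspace PT"
  by (auto simp: topspace_product_topology shift_space_def PiE_iff)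

lemma top_shift: "topspace (shift_top D GG) = Sig"
  unfolding shift_top_def using Sig_top by (auto simp: topspace_subtopology)

lemma pre_open: "openin PT {f \<in> topspace PT. f i = s i}"
proof -
  have "openin PT {f \<in> topspace PT. f i \<in> {s i} \<inter> D}"
    by (rule openin_continuous_map_preimage[OF continuous_map_product_projection]) auto
  moreover have "{f \<in> topspace PT. f i \<in> {s i} \<inter> D} = {f \<in> topspace PT. f i = s i}"
    by (auto simp: topspace_product_topology PiE_iff)
  ultimately show ?thesis by simp
qed

lemma cyl_PT: "openin PT {f \<in> topspace PT. \<forall>i\<le>n. f i = s i}"
proof (induction n)
  case 0 then show ?case using pre_open[of 0 s] by simp
next
  case (Suc n)
  have "{f \<in> topspace PT. \<forall>i\<le>Suc n. f i = s i} =
        {f \<in> topspace PT. \<forall>i\<le>n. f i = s i} \<inter> {f \<in> topspace PT. f (Suc n) = s (Suc n)}"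
    by (auto simp: le_Suc_eq)
  then show ?case using openin_Int[OF Suc.IH pre_open[of "Suc n" s]] by simp
qed

lemma cyl_open: "openin (shift_top D GG) {s' \<in> Sig. \<forall>i\<le>n. s' i = s i}"
proof -
  have eqc: "{s' \<in> Sig. \<forall>i\<le>n. s' i = s i} = {f \<in> topspace PT. \<forall>i\<le>n. f i = s i} \<inter> Sig"
    using Sig_top by auto
  show ?thesis unfolding shift_top_def openin_subtopology using cyl_PT[of n s] eqc by blast
qed

lemma open_cyl:
  assumes T: "openin (shift_top D GG) T" and s: "s \<in> T"
  shows "\<exists>n. {s' \<in> Sig. \<forall>i\<le>n. s' i = s i} \<subseteq> T"
proof -
  obtain V where V: "openin PT V" "T = V \<inter> Sig" using T unfolding shift_top_def openin_subtopology by blast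
  then have "s \<in> V" using s by blast
  then obtain U where U: "finite {i \<in> UNIV. U i \<noteq> topspace (discrete_topology D)}"
    "\<forall>i\<in>UNIV. openin (discrete_topology D) (U i)" "s \<in> Pi\<^sub>E UNIV U" "Pi\<^sub>E UNIV U \<subseteq> V"
    using V(1) unfolding openin_product_topology_alt by blast
  obtain n where n: "\<forall>i\<in>{i \<in> UNIV. U i \<noteq> topspace (discrete_topology D)}. i \<le> n"
    using U(1) finite_nat_set_iff_bounded_le by blast
  have "s' \<in> T" if s': "s' \<in> Sig" "\<forall>i\<le>n. s' i = s i" for s'
  proof -
    have "s' i \<in> U i" for i
    proof (cases "U i = D")
      case True then show ?thesis using Sig_D[OF s'(1)] by simp
    next
      case False
      then have "i \<le> n" using n by auto
      then show ?thesis using s'(2) U(3) by (auto simp: PiE_iff)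
    qed
    then have "s' \<in> Pi\<^sub>E UNIV U" by (auto simp: PiE_iff)
    then show ?thesis using U(4) V(2) s'(1) by blast
  qed
  then show ?thesis by blast
qed

lemma hh_cont: "continuous_map (shift_top D GG) (top_of_set X) hh"
proof (rule continuous_map_into_subtopology)
  show "hh \<in> topspace (shift_top D GG) \<rightarrow> X" using hh_X top_shift by auto
  show "continuous_map (shift_top D GG) euclidean hh"
    unfolding continuous_map_def
  proof (intro conjI allI impI)
    show "hh \<in> topspace (shift_top D GG) \<rightarrow> topspace euclidean" by simp
    fix U :: "'a set" assume "openin euclidean U"
    then have U: "open U" by simp
    show "openin (shift_top D GG) {x \<in> topspace (shift_top D GG). hh x \<in> U}"
    proof (subst openin_subopen, intro ballI)
      fix s assume "s \<in> {x \<in> topspace (shift_top D GG). hh x \<in> U}"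
      then have s: "s \<in> Sig" "hh s \<in> U" using top_shift by auto
      obtain e where e: "e > 0" "ball (hh s) e \<subseteq> U" using U s(2) open_contains_ball by blast
      obtain n where n: "\<forall>m\<ge>n. norm (cc ^ (m + 1) * (2 * MM) - 0) < e" using LIMSEQ_D[OF lim_cc e(1)] by blast
      have "cc ^ (n + 1) * (2 * MM) < e" using n by auto
      have "{s' \<in> Sig. \<forall>i\<le>n. s' i = s i} \<subseteq> {x \<in> topspace (shift_top D GG). hh x \<in> U}"
      proof
        fix s' assume s': "s' \<in> {s' \<in> Sig. \<forall>i\<le>n. s' i = s i}"
        have "dist (hh s') (hh s) < e" using hh_close[OF s(1), of s' n] s' \<open>cc ^ (n + 1) * (2 * MM) < e\<close> by simp
        then have "hh s' \<in> ball (hh s) e" by (simp add: dist_commute)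
        then show "s' \<in> {x \<in> topspace (shift_top D GG). hh x \<in> U}" using e(2) s' top_shift by auto
      qed
      moreover have "s \<in> {s' \<in> Sig. \<forall>i\<le>n. s' i = s i}" using s by simp
      ultimately show "\<exists>T. openin (shift_top D GG) T \<and> s \<in> T \<and> T \<subseteq> {x \<in> topspace (shift_top D GG). hh x \<in> U}"
        using cyl_open by blast
    qed
  qed
qed

primrec codf :: "(nat \<Rightarrow> 'a set) \<Rightarrow> nat \<Rightarrow> 'a \<Rightarrow> nat \<Rightarrow> 'a set" where
  "codf s n x 0 = s 0"
| "codf s n x (Suc i) = (if Suc i \<le> n then s (Suc i) else
     (SOME t. t \<in> D \<and> (g ^^ Suc i) x \<in> convex hull t \<and> convex hull t \<subseteq> convex hull (\<gamma> ` codf s n x i)))"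

lemma some_next:
  assumes "c \<in> D" "y \<in> convex hull (\<gamma> ` c)"
  shows "(SOME t. t \<in> D \<and> y \<in> convex hull t \<and> convex hull t \<subseteq> convex hull (\<gamma> ` c)) \<in> D \<and>
         y \<in> convex hull (SOME t. t \<in> D \<and> y \<in> convex hull t \<and> convex hull t \<subseteq> convex hull (\<gamma> ` c)) \<and>
         convex hull (SOME t. t \<in> D \<and> y \<in> convex hull t \<and> convex hull t \<subseteq> convex hull (\<gamma> ` c)) \<subseteq> convex hull (\<gamma> ` c)"
proof -
  have "\<exists>t. t \<in> D \<and> y \<in> convex hull t \<and> convex hull t \<subseteq> convex hull (\<gamma> ` c)"
    using cover_T[of "\<gamma> ` c" y] gD[OF assms(1)] assms(2) by blast
  from someI_ex[OF this] show ?thesis by blast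
qed

lemma codf:
  assumes x: "x \<in> X" and pre: "\<forall>i\<le>n. s i \<in> D \<and> (g ^^ i) x \<in> convex hull (s i)"
    and adm: "\<forall>i<n. (s i, s (Suc i)) \<in> GG"
  shows "codf s n x \<in> Sig" "x \<in> R (codf s n x)" "\<forall>i\<le>n. codf s n x i = s i"
proof -
  have eq: "codf s n x i = s i" if "i \<le> n" for i using that by (cases i) auto
  have inv: "codf s n x i \<in> D \<and> (g ^^ i) x \<in> convex hull (codf s n x i)" for i
  proof (induction i)
    case 0 then show ?case using pre[rule_format, of 0] by simp
  next
    case (Suc i)
    show ?case
    proof (cases "Suc i \<le> n")
      case True
      have "s (Suc i) \<in> D \<and> (g ^^ Suc i) x \<in> convex hull (s (Suc i))" using pre True by blast
      then show ?thesis using eq[OF True] by (simp only:)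
    next
      case False
      have "(g ^^ Suc i) x \<in> convex hull (\<gamma> ` codf s n x i)"
        using g_hull[of "codf s n x i" "(g ^^ i) x"] Suc D_iff by simp
      then show ?thesis using some_next[OF conjunct1[OF Suc]] False by simp
    qed
  qed
  have step: "(codf s n x i, codf s n x (Suc i)) \<in> GG" for i
  proof (cases "Suc i \<le> n")
    case True then show ?thesis using adm eq by simp
  next
    case False
    have "(g ^^ Suc i) x \<in> convex hull (\<gamma> ` codf s n x i)"
      using g_hull[of "codf s n x i" "(g ^^ i) x"] inv D_iff by simp
    then show ?thesis using some_next[OF conjunct1[OF inv]] False inv unfolding Grel_def by simp
  qed
  show "codf s n x \<in> Sig" unfolding shift_space_def using inv step by blast
  show "x \<in> R (codf s n x)" unfolding R_def using inv x by blast
  show "\<forall>i\<le>n. codf s n x i = s i" using eq by blast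
qed

lemma hh_onto: "hh ` Sig = X"
proof
  show "hh ` Sig \<subseteq> X" using hh_X by blast
  show "X \<subseteq> hh ` Sig"
  proof
    fix x assume x: "x \<in> X"
    obtain t where t: "t \<in> D" "x \<in> convex hull t" using cover_X[OF x] by blast
    let ?s = "codf (\<lambda>_. t) 0 x"
    have "?s \<in> Sig" "x \<in> R ?s" using codf[OF x, of 0 "\<lambda>_. t"] t by auto
    then show "x \<in> hh ` Sig" using hh(2) by blast
  qed
qed

lemma graph: "{(s, x). s \<in> Sig \<and> x \<in> X \<and> (\<forall>i. (g ^^ i) x \<in> convex hull (s i))} = {(s, hh s) | s. s \<in> Sig}"
proof -
  have "x = hh s" if "s \<in> Sig" "x \<in> X" "\<forall>i. (g ^^ i) x \<in> convex hull (s i)" for s x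
    using hh(2)[OF that(1)] that unfolding R_def by blast
  moreover have "hh s \<in> X \<and> (\<forall>i. (g ^^ i) (hh s) \<in> convex hull (s i))" if "s \<in> Sig" for s
    using hh(1)[OF that] unfolding R_def by blast
  ultimately show ?thesis by blast
qed

end



context ctx begin

definition "Qw w u = {x \<in> X. (\<forall>j<length w. (g ^^ j) x \<in> convex hull (w ! j)) \<and> (g ^^ length w) x \<in> convex hull u}"

lemma Qw_left:
  "w \<in> lists Ks \<Longrightarrow> \<exists>G. amap G \<and> (\<forall>x\<in>X. (\<forall>j<length w. (g ^^ j) x \<in> convex hull (w ! j)) \<longrightarrow> G ((g ^^ length w) x) = x)"
proof (induction w)
  case Nil
  then show ?case using amap_id2 by (intro exI[of _ "\<lambda>x. x"]) simp
next
  case (Cons t w)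
  have t: "t \<in> Ks" and w: "w \<in> lists Ks" using Cons(2) by auto
  obtain G' where G': "amap G'" "\<forall>x\<in>X. (\<forall>j<length w. (g ^^ j) x \<in> convex hull (w ! j)) \<longrightarrow> G' ((g ^^ length w) x) = x"
    using Cons.IH[OF w] by blast
  have "(bwd t \<circ> G') ((g ^^ length (t # w)) x) = x"
    if x: "x \<in> X" "\<forall>j<length (t # w). (g ^^ j) x \<in> convex hull ((t # w) ! j)" for x
  proof -
    have x0: "x \<in> convex hull t" using x(2) by (metis funpow_0 length_Cons nth_Cons_0 zero_less_Suc)
    have "(g ^^ j) (g x) \<in> convex hull (w ! j)" if j: "j < length w" for j
    proof -
      have "Suc j < length (t # w)" using j by simp
      then have "(g ^^ Suc j) x \<in> convex hull ((t # w) ! Suc j)" using x(2) by blast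
      then have "(g ^^ Suc j) x \<in> convex hull (w ! j)" by (simp only: nth_Cons_Suc)
      moreover have "(g ^^ j) (g x) = (g ^^ Suc j) x" by (simp add: funpow_Suc_right del: funpow.simps)
      ultimately show ?thesis by (simp only:)
    qed
    then have "G' ((g ^^ length w) (g x)) = g x" using G'(2) g_X[OF x(1)] by blast
    moreover have "(g ^^ length (t # w)) x = (g ^^ length w) (g x)" by (simp add: funpow_Suc_right del: funpow.simps)
    ultimately show ?thesis using bwd_g[OF t x0] by simp
  qed
  moreover have "amap (bwd t \<circ> G')" using amap_comp[OF G'(1) conjunct1[OF bwd[OF t]]] .
  ultimately show ?case by blast
qed

lemma Qw_dim: assumes "w \<in> lists Ks" "u \<in> Ks" shows "aff_dim (Qw w u) \<le> int (card u) - 1"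
proof -
  obtain G where G: "amap G" "\<forall>x\<in>X. (\<forall>j<length w. (g ^^ j) x \<in> convex hull (w ! j)) \<longrightarrow> G ((g ^^ length w) x) = x"
    using Qw_left[OF assms(1)] by blast
  have "Qw w u \<subseteq> G ` (convex hull u)"
  proof
    fix x assume x: "x \<in> Qw w u"
    then have "G ((g ^^ length w) x) = x" "(g ^^ length w) x \<in> convex hull u" using G(2) unfolding Qw_def by auto
    then show "x \<in> G ` (convex hull u)" by (metis image_eqI)
  qed
  then have "aff_dim (Qw w u) \<le> aff_dim (G ` (convex hull u))" by (rule aff_dim_subset)
  also have "\<dots> \<le> aff_dim (convex hull u)" by (rule amap_aff_dim[OF G(1)])
  also have "\<dots> = int (card u) - 1" using Ks_s[OF assms(2)] by (intro hull_aff_dim) auto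
  finally show ?thesis .
qed

lemma closed_X: "closed X" using compact_X compact_imp_closed by blast

lemma closed_pre: "finite C \<Longrightarrow> closed {x \<in> X. (g ^^ j) x \<in> convex hull C}"
proof -
  assume "finite C"
  then have "closed (X \<inter> (g ^^ j) -` (convex hull C))"
    using continuous_closed_preimage[OF conjunct1[OF gpow] closed_X closed_hull] by blast
  moreover have "X \<inter> (g ^^ j) -` (convex hull C) = {x \<in> X. (g ^^ j) x \<in> convex hull C}" by auto
  ultimately show ?thesis by simp
qed

lemma Qw_closed: assumes "w \<in> lists Ks" "u \<in> Ks" shows "closed (Qw w u)"
proof -
  have "Qw w u = (\<Inter>j\<in>{..<length w}. {x \<in> X. (g ^^ j) x \<in> convex hull (w ! j)}) \<inter> {x \<in> X. (g ^^ length w) x \<in> convex hull u}"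
    unfolding Qw_def by auto
  moreover have "closed {x \<in> X. (g ^^ j) x \<in> convex hull (w ! j)}" if "j < length w" for j
    using closed_pre Ks_s assms(1) that by (meson in_listsD nth_mem)
  moreover have "closed {x \<in> X. (g ^^ length w) x \<in> convex hull u}" using closed_pre Ks_s[OF assms(2)] by blast
  ultimately show ?thesis by (metis (no_types, lifting) closed_INT closed_Int lessThan_iff)
qed

lemma generic:
  assumes s: "s \<in> Sig"
  shows "\<exists>x\<in>Pn n s. \<forall>i. \<forall>u\<in>Ks. card u \<le> d \<longrightarrow> (g ^^ i) x \<notin> convex hull u"
proof -
  let ?P = "Pn n s"
  define Thin where "Thin = {u \<in> Ks. card u \<le> d}"
  define GF where "GF = (\<lambda>(w, u). ?P - Qw w u) ` (lists D \<times> Thin)"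
  have cP: "closed ?P" using Pn_props(2)[OF s] compact_imp_closed by blast
  have DKs: "lists D \<subseteq> lists Ks" using D_iff by (intro lists_mono) auto
  have "?P \<subseteq> closure (\<Inter> GF)"
  proof (rule Baire[OF cP])
    have "countable (lists D)"
      using sc_finite[OF scKs] D_iff by (intro countable_lists countable_finite) (auto intro: finite_subset)
    moreover have "finite Thin" unfolding Thin_def using sc_finite[OF scKs] by simp
    ultimately have "countable (lists D \<times> Thin)" by (intro countable_SIGMA) (auto intro: countable_finite)
    then show "countable GF" unfolding GF_def by simp
  next
    fix T assume "T \<in> GF"
    then obtain w u where wu: "w \<in> lists D" "u \<in> Thin" "T = ?P - Qw w u" unfolding GF_def by auto
    have w: "w \<in> lists Ks" using wu(1) DKs by blast
    have u: "u \<in> Ks" "card u \<le> d" using wu(2) Thin_def by auto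
    have cl: "closed (Qw w u)" using Qw_closed[OF w u(1)] .
    have "openin (top_of_set ?P) (?P - (?P \<inter> Qw w u))"
      by (rule openin_diff[OF openin_subtopology_self closedin_closed_Int[OF cl]])
    moreover have "?P - (?P \<inter> Qw w u) = T" using wu(3) by blast
    ultimately have op: "openin (top_of_set ?P) T" by simp
    have "aff_dim (Qw w u) \<le> int (card u) - 1" using Qw_dim[OF w u(1)] .
    also have "\<dots> < int d" using u(2) by simp
    also have "\<dots> \<le> aff_dim ?P" using Pn_props(4)[OF s] .
    finally have "closure (?P - Qw w u) = ?P"
      using dense_complement_convex_closed Pn_props(3)[OF s] cP by blast
    then show "openin (top_of_set ?P) T \<and> ?P \<subseteq> closure T" using op wu(3) by simp
  qed
  then have ne: "\<Inter> GF \<noteq> {}" using Pn_props(1)[OF s] by auto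
  then obtain x where x: "x \<in> \<Inter> GF" by blast
  obtain v where v: "v \<in> s 0" using Ks_s[OF Sig_Ks[OF s]] by blast
  have "{v} \<in> Ks" using sc_face[OF scKs Sig_Ks[OF s], of "{v}"] v by simp
  then have "{v} \<in> Thin" unfolding Thin_def using d1 by simp
  then have "?P - Qw [] {v} \<in> GF" unfolding GF_def by force
  then have xP: "x \<in> ?P" using x by blast
  have "(g ^^ i) x \<notin> convex hull u" if u: "u \<in> Ks" "card u \<le> d" for i u
  proof
    assume gi: "(g ^^ i) x \<in> convex hull u"
    have xX: "x \<in> X" using xP Pn_def by blast
    define w where "w = map (\<lambda>j. SOME t. t \<in> D \<and> (g ^^ j) x \<in> convex hull t) [0..<i]"
    have wj: "w ! j \<in> D \<and> (g ^^ j) x \<in> convex hull (w ! j)" if j: "j < i" for j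
    proof -
      have "\<exists>t\<in>D. (g ^^ j) x \<in> convex hull t" using cover_X gpow xX by blast
      then have "\<exists>t. t \<in> D \<and> (g ^^ j) x \<in> convex hull t" by blast
      from someI_ex[OF this] show ?thesis unfolding w_def using j by simp
    qed
    have lw: "length w = i" unfolding w_def by simp
    have "w \<in> lists D" using wj lw by (auto simp: in_set_conv_nth)
    moreover have "u \<in> Thin" using u Thin_def by simp
    ultimately have "?P - Qw w u \<in> GF" unfolding GF_def by force
    then have "x \<notin> Qw w u" using x by blast
    moreover have "x \<in> Qw w u" unfolding Qw_def using xX wj lw gi by auto
    ultimately show False by blast
  qed
  then show ?thesis using xP by blast
qed

lemma unique_coding:
  assumes x: "\<forall>i. \<forall>u\<in>Ks. card u \<le> d \<longrightarrow> (g ^^ i) x \<notin> convex hull u"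
    and z: "z \<in> Sig" "x \<in> R z" and z': "z' \<in> Sig" "x \<in> R z'"
  shows "z = z'"
proof
  fix i
  have a: "z i \<in> Ks" "card (z i) = d + 1" "z' i \<in> Ks" "card (z' i) = d + 1"
    using Sig_D[OF z(1)] Sig_D[OF z'(1)] D_iff by auto
  have y: "(g ^^ i) x \<in> convex hull (z i \<inter> z' i)"
    using z(2) z'(2) sc_inter[OF scKs a(1) a(3)] unfolding R_def by blast
  show "z i = z' i"
  proof (rule ccontr)
    assume ne: "z i \<noteq> z' i"
    have nemp: "z i \<inter> z' i \<noteq> {}" using y by auto
    have inK: "z i \<inter> z' i \<in> Ks" using sc_face[OF scKs a(1), of "z i \<inter> z' i"] nemp by auto
    have "z i \<inter> z' i \<noteq> z i"
    proof
      assume "z i \<inter> z' i = z i"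
      then have "z i \<subseteq> z' i" by blast
      then have "z i = z' i" using card_subset_eq[of "z' i" "z i"] Ks_s[OF a(3)] a(2,4) by simp
      then show False using ne by simp
    qed
    then have "z i \<inter> z' i \<subset> z i" by blast
    then have "card (z i \<inter> z' i) < card (z i)" using psubset_card_mono Ks_s[OF a(1)] by blast
    then have "card (z i \<inter> z' i) \<le> d" using a(2) by simp
    then show False using x inK y by blast
  qed
qed

lemma almost: "almost_one_to_one (shift_top D GG) hh"
  unfolding almost_one_to_one_def top_shift
proof
  show "shift_top D GG closure_of {y \<in> Sig. {z \<in> Sig. hh z = hh y} = {y}} \<subseteq> Sig"
    using closure_of_subset_topspace[of "shift_top D GG" "{y \<in> Sig. {z \<in> Sig. hh z = hh y} = {y}}"]
    unfolding top_shift .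
  show "Sig \<subseteq> shift_top D GG closure_of {y \<in> Sig. {z \<in> Sig. hh z = hh y} = {y}}"
  proof
    fix s assume s: "s \<in> Sig"
    show "s \<in> shift_top D GG closure_of {y \<in> Sig. {z \<in> Sig. hh z = hh y} = {y}}"
      unfolding in_closure_of
    proof (intro conjI allI impI)
      show "s \<in> topspace (shift_top D GG)" using s top_shift by simp
      fix T assume T: "s \<in> T \<and> openin (shift_top D GG) T"
      obtain n where n: "{s' \<in> Sig. \<forall>i\<le>n. s' i = s i} \<subseteq> T" using open_cyl T by blast
      obtain x where x: "x \<in> Pn n s" "\<forall>i. \<forall>u\<in>Ks. card u \<le> d \<longrightarrow> (g ^^ i) x \<notin> convex hull u"
        using generic[OF s] by blast
      have xX: "x \<in> X" using x(1) Pn_def by blast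
      have pre: "\<forall>i\<le>n. s i \<in> D \<and> (g ^^ i) x \<in> convex hull (s i)" using x(1) Sig_D[OF s] Pn_def by blast
      have adm: "\<forall>i<n. (s i, s (Suc i)) \<in> GG" using s shift_space_def by blast
      let ?s = "codf s n x"
      have s': "?s \<in> Sig" "x \<in> R ?s" "\<forall>i\<le>n. ?s i = s i" using codf[OF xX pre adm] by auto
      have hs: "hh ?s = x" using hh(2)[OF s'(1) s'(2)] by simp
      have "{z \<in> Sig. hh z = hh ?s} = {?s}"
      proof
        show "{z \<in> Sig. hh z = hh ?s} \<subseteq> {?s}"
        proof
          fix z assume "z \<in> {z \<in> Sig. hh z = hh ?s}"
          then have z: "z \<in> Sig" "hh z = x" using hs by auto
          have "x \<in> R z" using hh(1)[OF z(1)] z(2) by simp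
          then show "z \<in> {?s}" using unique_coding[OF x(2) z(1) _ s'(1) s'(2)] by simp
        qed
        show "{?s} \<subseteq> {z \<in> Sig. hh z = hh ?s}" using s'(1) by simp
      qed
      then have "?s \<in> {y \<in> Sig. {z \<in> Sig. hh z = hh y} = {y}}" using s'(1) by simp
      moreover have "?s \<in> T" using n s'(1,3) by blast
      ultimately show "\<exists>y. y \<in> {y \<in> Sig. {z \<in> Sig. hh z = hh y} = {y}} \<and> y \<in> T" by blast
    qed
  qed
qed

lemma main:
  "\<exists>h. {(s, x). s \<in> Sig \<and> x \<in> X \<and> (\<forall>i. (g ^^ i) x \<in> convex hull (s i))} = {(s, h s) | s. s \<in> Sig} \<and>
       continuous_map (shift_top D GG) (top_of_set X) h \<and>
       h ` Sig = X \<and>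
       almost_one_to_one (shift_top D GG) h \<and>
       (\<forall>s\<in>Sig. h (shift s) = g (h s))"
  using graph hh_cont hh_onto almost hh_shift by blast

end

theorem theorem4p10:
  fixes K Ks :: "'a::euclidean_space set set" and \<gamma> :: "'a \<Rightarrow> 'a" and d :: nat
  assumes sds: "simplicial_dynamical_system Ks K \<gamma>"
    and nd: "non_degenerate Ks \<gamma>"
    and d1: "d \<ge> 1"
    and edim: "everywhere_dim d (polyhedron K)"
  shows "\<exists>h. {(s, x). s \<in> shift_space (dsimplices d Ks) (Grel d Ks \<gamma>) \<and> x \<in> polyhedron K \<and>
                      (\<forall>i. (pl_map Ks \<gamma> ^^ i) x \<in> convex hull (s i))}
               = {(s, h s) | s. s \<in> shift_space (dsimplices d Ks) (Grel d Ks \<gamma>)} \<and>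
             continuous_map (shift_top (dsimplices d Ks) (Grel d Ks \<gamma>)) (top_of_set (polyhedron K)) h \<and>
             h ` shift_space (dsimplices d Ks) (Grel d Ks \<gamma>) = polyhedron K \<and>
             almost_one_to_one (shift_top (dsimplices d Ks) (Grel d Ks \<gamma>)) h \<and>
             (\<forall>s\<in>shift_space (dsimplices d Ks) (Grel d Ks \<gamma>). h (shift s) = pl_map Ks \<gamma> (h s))"
proof -
  interpret ctx K Ks \<gamma> d using sds nd d1 edim by unfold_locales
  show ?thesis by (fact main)
qed

end
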